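(* Let $\mathfrak{g}=\mathfrak{gl}(p,q)$ and $k\ge 1$. Then the transgression of $P_k$ is $t(P_k)=(-1)^{k-1}\,k\,\Lambda_{2k-1}$.
   Context: Setup for a finite-dimensional complex Lie superalgebra $\mathfrak{g}=\mathfrak{g}_{\bar 0}\oplus\mathfrak{g}_{\bar 1}$; elements are homogeneous, lower-case letters denote their $\mathbb{Z}_2$-degrees. For $\mathcal{X}=(X_1,\dots,X_k)$ and $\sigma\in\mathfrak{S}_k$ let $\epsilon(\sigma,\mathcal{X})=(-1)^{K}$, $K$ the number of pairs $i<j$ with $\sigma(i)>\sigma(j)$ and $X_{\sigma(i)},X_{\sigma(j)}$ both odd. A $k$-linear form $F$ on $\mathfrak{g}$ has degree $f$ if $F(X_1,\dots,X_k)\neq0$ only when $x_1+\dots+x_k+f=0$ in $\mathbb{Z}_2$ (scalars are even). $F$ is supersymmetric if $\epsilon(\sigma,\mathcal{X})F(X_{\sigma(1)},\dots,X_{\sigma(k)})=F(X_1,\dots,X_k)$ for all $\sigma$, and skew supersymmetric if $\epsilon(\sigma)\epsilon(\sigma,\mathcal{X})F(X_{\sigma(1)},\dots)=F(X_1,\dots)$; $\mathcal{P}(\mathfrak{g})$, $\mathcal{A}(\mathfrak{g})$ denote the spaces of such forms (of all orders). Super tensor product: $(F\boxtimes G)(X_1,\dots,X_{a+b})=(-1)^{g(x_1+\dots+x_a)}F(X_1,\dots,X_a)G(X_{a+1},\dots,X_{a+b})$ for $F$ an $a$-form, $G$ a $b$-form of degree $g$. With $S(F)=\sum_\sigma\epsilon(\sigma,\mathcal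 X)F(X_{\sigma(1)},\dots)$ and $A(F)=\sum_\sigma\epsilon(\sigma)\epsilon(\sigma,\mathcal X)F(X_{\sigma(1)},\dots)$, set $F\cdot G=\frac1{a!b!}S(F\boxtimes G)$ on $\mathcal P(\mathfrak g)$ and $F\wedge G=\frac1{a!b!}A(F\boxtimes G)$ on $\mathcal A(\mathfrak g)$. For $X\in\mathfrak g$ and $F$ of degree $f$, $D_X(F)(X_1,\dots,X_{a-1})=(-1)^{xf}F(X,X_1,\dots,X_{a-1})$. The map $d:\mathcal A(\mathfrak g)\to\mathcal A(\mathfrak g)$ is the super derivation of $(\mathcal A(\mathfrak g),\wedge)$ raising the order by one, with $d\phi(X_1,X_2)=-\phi([X_1,X_2])$ for $\phi\in\mathfrak g^*$ (explicitly $dF(X_1,\dots,X_{m+1})=\sum_{i<j}(-1)^{i+j}(-1)^{x_i(x_1+\dots+x_{i-1})}(-1)^{x_j(x_1+\dots+\widehat{x_i}+\dots+x_{j-1})}F([X_i,X_j],X_1,\dots,\widehat{X_i},\dots,\widehat{X_j},\dots,X_{m+1})$). Let $s:\mathcal P(\mathfrak g)\to\mathcal A(\mathfrak g)$ be the algebra homomorphism with $s(\phi)=d\phi$ for $\phi\in\mathfrak g^*$. Choose a basis $X_1,\dots,X_m$ of $\mathfrak g_{\bar0}$ with dual basis $\Omega_1,\dots,\Omega_m$ and a basis $Y_1,\dots,Y_r$ of $\mathfrak g_{\bar1}$ with dual basis $\phi_1,\dots,\phi_r$. The transgression $t:\mathcal P(\mathfrak g)\to\mathcal A(\mathfrak g)$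 is $t(P)=\sum_i\Omega_i\wedge s(D_{X_i}P)-\sum_j\phi_j\wedge s(D_{Y_j}P)$ (basis independent). Now $\mathfrak g=\mathfrak{gl}(p,q)=\mathrm{End}(V)$, $V=V_{\bar0}\oplus V_{\bar1}$, $\dim V_{\bar0}=p$, $\dim V_{\bar1}=q$, with super trace $\mathrm{str}\begin{pmatrix}a&b\\c&d\end{pmatrix}=\mathrm{tr}(a)-\mathrm{tr}(d)$. For $k\ge1$ and homogeneous $X_i$: $\mathcal P_k(X_1,\dots,X_k)=\sum_{\sigma\in\mathfrak S_k}\epsilon(\sigma,\mathcal X)X_{\sigma(1)}\cdots X_{\sigma(k)}$, $\mathcal A_k(X_1,\dots,X_k)=\sum_\sigma\epsilon(\sigma)\epsilon(\sigma,\mathcal X)X_{\sigma(1)}\cdots X_{\sigma(k)}$ (matrix products), $P_k=\mathrm{str}\circ\mathcal P_k\in\mathcal P(\mathfrak g)$, $\Lambda_k=\mathrm{str}\circ\mathcal A_k\in\mathcal A(\mathfrak g)$. *)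

theory Defs
  imports Complex_Main "HOL-Combinatorics.Permutations"
begin

text \<open>The Lie superalgebra gl(p,q) = End(V), dim V_0 = p, dim V_1 = q, realised as
  (p+q) x (p+q) complex matrices (functions nat => nat => complex vanishing outside
  the index range {0..<p+q}).\<close>

type_synonym smat = "nat \<Rightarrow> nat \<Rightarrow> complex"
type_synonym sform = "smat list \<Rightarrow> complex"

definition odd_idx :: "nat \<Rightarrow> nat \<Rightarrow> bool" where
  "odd_idx p i \<longleftrightarrow> p \<le> i"

definition gl :: "nat \<Rightarrow> nat \<Rightarrow> smat set" where
  "gl p q = {A. \<forall>i j. A i j \<noteq> 0 \<longrightarrow> i < p + q \<and> j < p + q}"

definition even_elt :: "nat \<Rightarrow> nat \<Rightarrow> smat \<Rightarrow> bool" where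
  "even_elt p q A \<longleftrightarrow> A \<in> gl p q \<and> (\<forall>i j. A i j \<noteq> 0 \<longrightarrow> odd_idx p i = odd_idx p j)"

definition odd_elt :: "nat \<Rightarrow> nat \<Rightarrow> smat \<Rightarrow> bool" where
  "odd_elt p q A \<longleftrightarrow> A \<in> gl p q \<and> (\<forall>i j. A i j \<noteq> 0 \<longrightarrow> odd_idx p i \<noteq> odd_idx p j)"

definition homog :: "nat \<Rightarrow> nat \<Rightarrow> smat \<Rightarrow> bool" where
  "homog p q A \<longleftrightarrow> even_elt p q A \<or> odd_elt p q A"

text \<open>Z2-degree of a homogeneous element (0 = even, 1 = odd; the zero matrix is even).\<close>
definition par :: "nat \<Rightarrow> smat \<Rightarrow> nat" where
  "par p A = (if (\<forall>i j. A i j \<noteq> 0 \<longrightarrow> odd_idx p i = odd_idx p j) then 0 else 1)"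

definition parsum :: "nat \<Rightarrow> smat list \<Rightarrow> nat" where
  "parsum p Xs = sum_list (map (par p) Xs)"

definition mmult :: "nat \<Rightarrow> smat \<Rightarrow> smat \<Rightarrow> smat" where
  "mmult n A B = (\<lambda>i j. \<Sum>l<n. A i l * B l j)"

definition mone :: "nat \<Rightarrow> smat" where
  "mone n = (\<lambda>i j. if i = j \<and> i < n then 1 else 0)"

definition mprod :: "nat \<Rightarrow> smat list \<Rightarrow> smat" where
  "mprod n Xs = foldr (mmult n) Xs (mone n)"

definition str :: "nat \<Rightarrow> nat \<Rightarrow> smat \<Rightarrow> complex" where
  "str p q A = (\<Sum>i<p. A i i) - (\<Sum>i\<in>{p..<p+q}. A i i)"

definition sbracket :: "nat \<Rightarrow> nat \<Rightarrow> smat \<Rightarrow> smat \<Rightarrow> smat" where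
  "sbracket p q X Y = (\<lambda>i j. mmult (p+q) X Y i j
      - (-1) ^ (par p X * par p Y) * mmult (p+q) Y X i j)"

definition permute :: "nat \<Rightarrow> (nat \<Rightarrow> nat) \<Rightarrow> smat list \<Rightarrow> smat list" where
  "permute k \<sigma> Xs = map (\<lambda>i. Xs ! \<sigma> i) [0..<k]"

definition koszul :: "nat \<Rightarrow> nat \<Rightarrow> (nat \<Rightarrow> nat) \<Rightarrow> smat list \<Rightarrow> complex" where
  "koszul p k \<sigma> Xs = (-1) ^ card {(i, j). i < j \<and> j < k \<and> \<sigma> j < \<sigma> i
       \<and> par p (Xs ! \<sigma> i) = 1 \<and> par p (Xs ! \<sigma> j) = 1}"

definition symz :: "nat \<Rightarrow> nat \<Rightarrow> sform \<Rightarrow> sform" where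
  "symz p k F = (\<lambda>Xs. \<Sum>\<sigma>\<in>{\<sigma>. \<sigma> permutes {..<k}}. koszul p k \<sigma> Xs * F (permute k \<sigma> Xs))"

definition altz :: "nat \<Rightarrow> nat \<Rightarrow> sform \<Rightarrow> sform" where
  "altz p k F = (\<lambda>Xs. \<Sum>\<sigma>\<in>{\<sigma>. \<sigma> permutes {..<k}}.
      of_int (sign \<sigma>) * koszul p k \<sigma> Xs * F (permute k \<sigma> Xs))"

text \<open>Degree-g component of a form (a form F has degree f iff F = degpart f F).\<close>
definition degpart :: "nat \<Rightarrow> nat \<Rightarrow> sform \<Rightarrow> sform" where
  "degpart p g G = (\<lambda>Xs. if even (parsum p Xs + g) then G Xs else 0)"

text \<open>Super tensor product of an a-form F with G (extended bilinearly over the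
  degree components of G).\<close>
definition boxt :: "nat \<Rightarrow> nat \<Rightarrow> sform \<Rightarrow> sform \<Rightarrow> sform" where
  "boxt p a F G = (\<lambda>Xs. \<Sum>g\<in>{0, 1::nat}.
      (-1) ^ (g * parsum p (take a Xs)) * F (take a Xs) * degpart p g G (drop a Xs))"

definition swedge :: "nat \<Rightarrow> nat \<Rightarrow> nat \<Rightarrow> sform \<Rightarrow> sform \<Rightarrow> sform" where
  "swedge p a b F G = (\<lambda>Xs. altz p (a + b) (boxt p a F G) Xs / (fact a * fact b))"

definition Dop :: "nat \<Rightarrow> smat \<Rightarrow> sform \<Rightarrow> sform" where
  "Dop p X F = (\<lambda>Xs. \<Sum>f\<in>{0, 1::nat}. (-1) ^ (par p X * f) * degpart p f F (X # Xs))"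

text \<open>The differential d (explicit formula, indices shifted to start at 0).\<close>
definition dop :: "nat \<Rightarrow> nat \<Rightarrow> sform \<Rightarrow> sform" where
  "dop p q F = (\<lambda>Xs. \<Sum>j<length Xs. \<Sum>i<j.
      (-1) ^ (i + j)
      * (-1) ^ (par p (Xs ! i) * parsum p (take i Xs))
      * (-1) ^ (par p (Xs ! j) * (parsum p (take j Xs) - par p (Xs ! i)))
      * F (sbracket p q (Xs ! i) (Xs ! j)
            # map (nth Xs) (filter (\<lambda>t. t \<noteq> i \<and> t \<noteq> j) [0..<length Xs])))"

definition elem :: "nat \<Rightarrow> nat \<Rightarrow> smat" where
  "elem a b = (\<lambda>i j. if i = a \<and> j = b then 1 else 0)"

definition dualf :: "nat \<Rightarrow> nat \<Rightarrow> sform" where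
  "dualf a b = (\<lambda>Xs. hd Xs a b)"

definition basis_idx :: "nat \<Rightarrow> nat \<Rightarrow> (nat \<times> nat) set" where
  "basis_idx p q = {0..<p+q} \<times> {0..<p+q}"

definition bodd :: "nat \<Rightarrow> nat \<times> nat \<Rightarrow> bool" where
  "bodd p ab \<longleftrightarrow> odd_idx p (fst ab) \<noteq> odd_idx p (snd ab)"

fun wedge_list :: "nat \<Rightarrow> sform list \<Rightarrow> sform" where
  "wedge_list p [] = (\<lambda>Xs. 1)"
| "wedge_list p (\<alpha> # \<alpha>s) = swedge p 2 (2 * length \<alpha>s) \<alpha> (wedge_list p \<alpha>s)"

text \<open>The algebra homomorphism s : P(g) -> A(g) with s(phi) = d phi, on a
  supersymmetric a-form F.  It is obtained by writing
  F = (1/a!) Sum_{i_1..i_a} (-1)^{#odd pairs} F(E_{i_1},...,E_{i_a}) e_{i_1}...e_{i_a}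
  (e_i the dual basis) and applying s multiplicatively.\<close>
definition smap :: "nat \<Rightarrow> nat \<Rightarrow> nat \<Rightarrow> sform \<Rightarrow> sform" where
  "smap p q a F = (\<lambda>Xs. (\<Sum>idx\<in>{idx. length idx = a \<and> set idx \<subseteq> basis_idx p q}.
      (-1) ^ card {(u, v). u < v \<and> v < a \<and> bodd p (idx ! u) \<and> bodd p (idx ! v)}
      * F (map (\<lambda>(x, y). elem x y) idx)
      * wedge_list p (map (\<lambda>(x, y). dop p q (dualf x y)) idx) Xs) / fact a)"

definition transg :: "nat \<Rightarrow> nat \<Rightarrow> nat \<Rightarrow> sform \<Rightarrow> sform" where
  "transg p q k P = (\<lambda>Xs.
      (\<Sum>ab\<in>{ab\<in>basis_idx p q. \<not> bodd p ab}.
          swedge p 1 (2 * (k - 1)) (dualf (fst ab) (snd ab))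
             (smap p q (k - 1) (Dop p (elem (fst ab) (snd ab)) P)) Xs)
    - (\<Sum>ab\<in>{ab\<in>basis_idx p q. bodd p ab}.
          swedge p 1 (2 * (k - 1)) (dualf (fst ab) (snd ab))
             (smap p q (k - 1) (Dop p (elem (fst ab) (snd ab)) P)) Xs))"

definition Pk :: "nat \<Rightarrow> nat \<Rightarrow> nat \<Rightarrow> sform" where
  "Pk p q k = (\<lambda>Xs. str p q (\<lambda>i j. \<Sum>\<sigma>\<in>{\<sigma>. \<sigma> permutes {..<k}}.
      koszul p k \<sigma> Xs * mprod (p+q) (permute k \<sigma> Xs) i j))"

definition Lamk :: "nat \<Rightarrow> nat \<Rightarrow> nat \<Rightarrow> sform" where
  "Lamk p q k = (\<lambda>Xs. str p q (\<lambda>i j. \<Sum>\<sigma>\<in>{\<sigma>. \<sigma> permutes {..<k}}.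
      of_int (sign \<sigma>) * koszul p k \<sigma> Xs * mprod (p+q) (permute k \<sigma> Xs) i j))"

end

theory Submission
  imports Defs
begin

definition kzf :: "(nat \<Rightarrow> bool) \<Rightarrow> (nat \<Rightarrow> nat) \<Rightarrow> nat \<Rightarrow> complex" where
  "kzf D \<sigma> N = (-1) ^ card {(i, j). i < j \<and> j < N \<and> \<sigma> j < \<sigma> i \<and> D (\<sigma> i) \<and> D (\<sigma> j)}"

definition PP :: "nat \<Rightarrow> (nat \<times> nat) set" where
  "PP N = {(i, j). i < j \<and> j < N}"

lemma finite_PP[simp]: "finite (PP N)"
  by (rule finite_subset[of _ "{..<N} \<times> {..<N}"]) (auto simp: PP_def)

lemma koszul_kzf: "koszul p N \<sigma> Xs = kzf (\<lambda>a. par p (Xs ! a) = 1) \<sigma> N"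
  by (simp add: koszul_def kzf_def)

lemma prod_if_pow:
  assumes "finite A"
  shows "(\<Prod>x\<in>A. if P x then (-1::complex) else 1) = (-1) ^ card {x\<in>A. P x}"
proof -
  have "(\<Prod>x\<in>A. if P x then (-1::complex) else 1) = (\<Prod>x\<in>{x\<in>A. P x}. -1)"
    using assms by (simp add: prod.If_cases Int_def conj_commute)
  then show ?thesis by simp
qed

lemma kzf_prod:
  "kzf D \<sigma> N = (\<Prod>(i, j)\<in>PP N. if \<sigma> j < \<sigma> i \<and> D (\<sigma> i) \<and> D (\<sigma> j) then -1 else 1)"
proof -
  have "(\<Prod>(i, j)\<in>PP N. if \<sigma> j < \<sigma> i \<and> D (\<sigma> i) \<and> D (\<sigma> j) then -1 else (1::complex))
      = (\<Prod>x\<in>PP N. if (\<lambda>(i,j). \<sigma> j < \<sigma> i \<and> D (\<sigma> i) \<and> D (\<sigma> j)) x then -1 else 1)"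
    by (simp add: case_prod_beta)
  also have "\<dots> = (-1) ^ card {x\<in>PP N. (\<lambda>(i,j). \<sigma> j < \<sigma> i \<and> D (\<sigma> i) \<and> D (\<sigma> j)) x}"
    by (rule prod_if_pow) simp
  also have "{x\<in>PP N. (\<lambda>(i,j). \<sigma> j < \<sigma> i \<and> D (\<sigma> i) \<and> D (\<sigma> j)) x}
      = {(i, j). i < j \<and> j < N \<and> \<sigma> j < \<sigma> i \<and> D (\<sigma> i) \<and> D (\<sigma> j)}"
    by (auto simp: PP_def)
  finally show ?thesis by (simp add: kzf_def)
qed

lemma pairs_bij:
  assumes tau: "\<tau> permutes {..<N}"
  shows "bij_betw (\<lambda>(i, j). (min (\<tau> i) (\<tau> j), max (\<tau> i) (\<tau> j))) (PP N) (PP N)"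
proof -
  define g where "g = (\<lambda>(i::nat, j::nat). (min (\<tau> i) (\<tau> j), max (\<tau> i) (\<tau> j)))"
  define g' where "g' = (\<lambda>(i::nat, j::nat). (min (inv \<tau> i) (inv \<tau> j), max (inv \<tau> i) (inv \<tau> j)))"
  have tau': "inv \<tau> permutes {..<N}" using tau by (rule permutes_inv)
  have inv1: "\<And>x. inv \<tau> (\<tau> x) = x" using tau permutes_inverses(2) by fastforce
  have inv2: "\<And>x. \<tau> (inv \<tau> x) = x" using tau permutes_inverses(1) by fastforce
  have img: "\<And>i. i < N \<Longrightarrow> \<tau> i < N" using tau permutes_in_image by fastforce
  have img': "\<And>i. i < N \<Longrightarrow> inv \<tau> i < N" using tau' permutes_in_image by fastforce
  have ne: "\<And>i j. i \<noteq> j \<Longrightarrow> \<tau> i \<noteq> \<tau> j" using inv1 by metis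
  have ne': "\<And>i j. i \<noteq> j \<Longrightarrow> inv \<tau> i \<noteq> inv \<tau> j" using inv2 by metis
  have A: "\<And>x. x \<in> PP N \<Longrightarrow> g x \<in> PP N"
  proof -
    fix x assume "x \<in> PP N"
    then obtain i j where ij: "x = (i, j)" "i < j" "j < N" by (auto simp: PP_def)
    have "\<tau> i \<noteq> \<tau> j" using ne ij by simp
    then show "g x \<in> PP N" using ij img[of i] img[of j] by (simp add: g_def PP_def min_def max_def)
  qed
  have B: "\<And>x. x \<in> PP N \<Longrightarrow> g' x \<in> PP N"
  proof -
    fix x assume "x \<in> PP N"
    then obtain i j where ij: "x = (i, j)" "i < j" "j < N" by (auto simp: PP_def)
    have "inv \<tau> i \<noteq> inv \<tau> j" using ne' ij by simp
    then show "g' x \<in> PP N" using ij img'[of i] img'[of j] by (simp add: g'_def PP_def min_def max_def)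
  qed
  have C: "\<And>x. x \<in> PP N \<Longrightarrow> g' (g x) = x"
  proof -
    fix x assume "x \<in> PP N"
    then obtain i j where ij: "x = (i, j)" "i < j" by (auto simp: PP_def)
    show "g' (g x) = x"
    proof (cases "\<tau> i < \<tau> j")
      case True then show ?thesis using ij by (simp add: g_def g'_def inv1)
    next
      case False then show ?thesis using ij by (simp add: g_def g'_def inv1 min_def max_def)
    qed
  qed
  have D: "\<And>x. x \<in> PP N \<Longrightarrow> g (g' x) = x"
  proof -
    fix x assume "x \<in> PP N"
    then obtain i j where ij: "x = (i, j)" "i < j" by (auto simp: PP_def)
    show "g (g' x) = x"
    proof (cases "inv \<tau> i < inv \<tau> j")
      case True then show ?thesis using ij by (simp add: g_def g'_def inv2)
    next
      case False then show ?thesis using ij by (simp add: g_def g'_def inv2 min_def max_def)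
    qed
  qed
  have "bij_betw g (PP N) (PP N)"
    by (rule bij_betw_byWitness[where f'=g']) (use A B C D in auto)
  then show ?thesis by (simp add: g_def)
qed

lemma prod_pairs_perm:
  fixes h :: "nat \<Rightarrow> nat \<Rightarrow> complex"
  assumes tau: "\<tau> permutes {..<N}" and sym: "\<And>a b. h a b = h b a"
  shows "(\<Prod>(i, j)\<in>PP N. h (\<tau> i) (\<tau> j)) = (\<Prod>(i, j)\<in>PP N. h i j)"
proof -
  have hm: "\<And>a b. h a b = h (min a b) (max a b)" using sym by (simp add: min_def max_def)
  have "(\<Prod>(i, j)\<in>PP N. h (\<tau> i) (\<tau> j))
      = (\<Prod>x\<in>PP N. (\<lambda>(a,b). h a b) ((\<lambda>(i, j). (min (\<tau> i) (\<tau> j), max (\<tau> i) (\<tau> j))) x))"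
    by (rule prod.cong[OF refl]) (auto simp: hm[of "\<tau> _" "\<tau> _"])
  also have "\<dots> = (\<Prod>x\<in>PP N. (\<lambda>(a,b). h a b) x)"
    by (rule prod.reindex_bij_betw[OF pairs_bij[OF tau]])
  finally show ?thesis by simp
qed

lemma kzf_comp:
  assumes s: "\<sigma> permutes {..<N}" and t: "\<tau> permutes {..<N}"
  shows "kzf D (\<sigma> \<circ> \<tau>) N = kzf D \<sigma> N * kzf (D \<circ> \<sigma>) \<tau> N"
proof -
  define h where "h = (\<lambda>a b. if ((a < b \<and> \<sigma> b < \<sigma> a) \<or> (b < a \<and> \<sigma> a < \<sigma> b)) \<and> D (\<sigma> a) \<and> D (\<sigma> b)
     then (-1::complex) else 1)"
  have injs: "inj \<sigma>" using s permutes_inj by blast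
  have injt: "inj \<tau>" using t permutes_inj by blast
  have "kzf D \<sigma> N = (\<Prod>(i, j)\<in>PP N. h i j)"
    unfolding kzf_prod by (rule prod.cong) (auto simp: PP_def h_def)
  also have "\<dots> = (\<Prod>(i, j)\<in>PP N. h (\<tau> i) (\<tau> j))"
    by (rule prod_pairs_perm[OF t, symmetric]) (auto simp: h_def)
  finally have 1: "kzf D \<sigma> N = (\<Prod>(i, j)\<in>PP N. h (\<tau> i) (\<tau> j))" .
  have "kzf D (\<sigma> \<circ> \<tau>) N = (\<Prod>(i, j)\<in>PP N. h (\<tau> i) (\<tau> j) *
      (if \<tau> j < \<tau> i \<and> D (\<sigma> (\<tau> i)) \<and> D (\<sigma> (\<tau> j)) then -1 else 1))"
    unfolding kzf_prod
  proof (rule prod.cong[OF refl])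
    fix x assume "x \<in> PP N"
    then obtain i j where x: "x = (i, j)" "i < j" by (auto simp: PP_def)
    have a: "\<tau> i \<noteq> \<tau> j" using injt x by (metis less_irrefl injD)
    have b: "\<sigma> (\<tau> i) \<noteq> \<sigma> (\<tau> j)" using injs a by (metis injD)
    show "(case x of (i, j) \<Rightarrow> if (\<sigma> \<circ> \<tau>) j < (\<sigma> \<circ> \<tau>) i \<and> D ((\<sigma> \<circ> \<tau>) i) \<and> D ((\<sigma> \<circ> \<tau>) j) then - 1 else 1) =
          (case x of (i, j) \<Rightarrow> h (\<tau> i) (\<tau> j) * (if \<tau> j < \<tau> i \<and> D (\<sigma> (\<tau> i)) \<and> D (\<sigma> (\<tau> j)) then - 1 else 1))"
      using a b x by (auto simp: h_def)
  qed
  also have "\<dots> = (\<Prod>(i, j)\<in>PP N. h (\<tau> i) (\<tau> j)) * kzf (D \<circ> \<sigma>) \<tau> N"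
    unfolding kzf_prod prod.distrib[symmetric] by (rule prod.cong) auto
  finally show ?thesis using 1 by simp
qed

lemma kzf_cong:
  assumes "\<tau> permutes {..<N}" "\<And>a. a < N \<Longrightarrow> D a = D' a"
  shows "kzf D \<tau> N = kzf D' \<tau> N"
proof -
  have "\<And>i. i < N \<Longrightarrow> \<tau> i < N" using assms(1) permutes_in_image by fastforce
  then have "{(i, j). i < j \<and> j < N \<and> \<tau> j < \<tau> i \<and> D (\<tau> i) \<and> D (\<tau> j)}
     = {(i, j). i < j \<and> j < N \<and> \<tau> j < \<tau> i \<and> D' (\<tau> i) \<and> D' (\<tau> j)}"
    using assms(2) by auto
  then show ?thesis by (simp add: kzf_def)
qed


lemma kzf_transpose_lt:
  assumes "a < b" "b < N"
  shows "kzf (\<lambda>_. True) (Transposition.transpose a b) N = -1"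
proof -
  let ?t = "Transposition.transpose a b"
  have S: "{(i, j). i < j \<and> j < N \<and> ?t j < ?t i \<and> True \<and> True}
      = ({a} \<times> {a<..b}) \<union> ({a<..<b} \<times> {b})"
    using assms by (auto simp: Transposition.transpose_def split: if_splits)
  have d: "({a} \<times> {a<..b}) \<inter> ({a<..<b} \<times> {b}) = {}" by auto
  have "card (({a} \<times> {a<..b}) \<union> ({a<..<b} \<times> {b})) = (b - a) + (b - a - 1)"
    by (subst card_Un_disjoint) (use d in \<open>auto simp: card_cartesian_product\<close>)
  moreover have "odd ((b - a) + (b - a - 1))" using assms by presburger
  ultimately show ?thesis unfolding kzf_def S by simp
qed

lemma kzf_transpose:
  assumes "a < N" "b < N" "a \<noteq> b"
  shows "kzf (\<lambda>_. True) (Transposition.transpose a b) N = -1"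
proof (cases "a < b")
  case True then show ?thesis using kzf_transpose_lt assms by blast
next
  case False
  then have "b < a" using assms by simp
  then show ?thesis using kzf_transpose_lt[of b a N] assms by (simp add: transpose_commute)
qed

lemma sign_kzf:
  assumes "\<sigma> permutes {..<N}"
  shows "of_int (sign \<sigma>) = kzf (\<lambda>_. True) \<sigma> N"
  using assms finite_lessThan
proof (induction rule: permutes_induct)
  case id
  have e: "{(i, j). i < j \<and> j < N \<and> j < i} = {}" by auto
  show ?case by (simp add: kzf_def e)
next
  case (swap a b p)
  have tp: "Transposition.transpose a b permutes {..<N}" using swap by (simp add: permutes_swap_id)
  have "kzf (\<lambda>_. True) (Transposition.transpose a b \<circ> p) N
     = kzf (\<lambda>_. True) (Transposition.transpose a b) N * kzf ((\<lambda>_. True) \<circ> Transposition.transpose a b) p N"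
    by (rule kzf_comp[OF tp \<open>p permutes {..<N}\<close>])
  also have "\<dots> = - kzf (\<lambda>_. True) p N" using kzf_transpose[of a N b] swap by (simp add: o_def)
  finally have 1: "kzf (\<lambda>_. True) (Transposition.transpose a b \<circ> p) N = - kzf (\<lambda>_. True) p N" .
  have "sign (Transposition.transpose a b \<circ> p) = sign (Transposition.transpose a b) * sign p"
    by (rule sign_compose) (use swap tp in \<open>auto simp: permutation_permutes\<close>)
  then have "sign (Transposition.transpose a b \<circ> p) = - sign p" using swap by (simp add: sign_swap_id)
  then show ?case using 1 swap by (simp del: comp_apply)
qed

definition sh :: "nat \<Rightarrow> nat \<Rightarrow> (nat \<Rightarrow> nat) \<Rightarrow> nat \<Rightarrow> nat" where
  "sh a b \<tau> = (\<lambda>i. if a \<le> i \<and> i < a + b then a + \<tau> (i - a) else i)"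

lemma sh_permutes:
  assumes "\<tau> permutes {..<b}"
  shows "sh a b \<tau> permutes {..<a+b}"
proof -
  have img: "\<And>i. i < b \<Longrightarrow> \<tau> i < b" using assms permutes_in_image by fastforce
  have tau': "inv \<tau> permutes {..<b}" using assms by (rule permutes_inv)
  have img': "\<And>i. i < b \<Longrightarrow> inv \<tau> i < b" using tau' permutes_in_image by fastforce
  have inv1: "\<And>x. inv \<tau> (\<tau> x) = x" using assms permutes_inverses(2) by fastforce
  have inv2: "\<And>x. \<tau> (inv \<tau> x) = x" using assms permutes_inverses(1) by fastforce
  have "bij_betw (sh a b \<tau>) {..<a+b} {..<a+b}"
  proof (rule bij_betw_byWitness[where f' = "sh a b (inv \<tau>)"])
    show "\<forall>x\<in>{..<a + b}. sh a b (inv \<tau>) (sh a b \<tau> x) = x"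
      using img by (auto simp: sh_def inv1)
    show "\<forall>y\<in>{..<a + b}. sh a b \<tau> (sh a b (inv \<tau>) y) = y"
      using img' by (auto simp: sh_def inv2)
    show "sh a b \<tau> ` {..<a + b} \<subseteq> {..<a + b}"
      using img by (auto simp: sh_def)
    show "sh a b (inv \<tau>) ` {..<a + b} \<subseteq> {..<a + b}"
      using img' by (auto simp: sh_def)
  qed
  then show ?thesis by (rule bij_imp_permutes) (auto simp: sh_def)
qed

lemma kzf_sh:
  assumes "\<tau> permutes {..<b}"
  shows "kzf D (sh a b \<tau>) (a + b) = kzf (\<lambda>i. D (a + i)) \<tau> b"
proof -
  have img: "\<And>i. i < b \<Longrightarrow> \<tau> i < b" using assms permutes_in_image by fastforce
  have "{(i, j). i < j \<and> j < a + b \<and> sh a b \<tau> j < sh a b \<tau> i \<and> D (sh a b \<tau> i) \<and> D (sh a b \<tau> j)}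
     = (\<lambda>(i, j). (a + i, a + j)) ` {(i, j). i < j \<and> j < b \<and> \<tau> j < \<tau> i \<and> D (a + \<tau> i) \<and> D (a + \<tau> j)}"
  proof (rule set_eqI, rule iffI)
    fix x assume x: "x \<in> {(i, j). i < j \<and> j < a + b \<and> sh a b \<tau> j < sh a b \<tau> i \<and> D (sh a b \<tau> i) \<and> D (sh a b \<tau> j)}"
    then obtain i j where ij: "x = (i, j)" "i < j" "j < a + b" "sh a b \<tau> j < sh a b \<tau> i"
      "D (sh a b \<tau> i)" "D (sh a b \<tau> j)" by auto
    have "a \<le> i"
    proof (rule ccontr)
      assume "\<not> a \<le> i"
      then have "sh a b \<tau> i = i" by (simp add: sh_def)
      moreover have "i < sh a b \<tau> j" unfolding sh_def using ij \<open>\<not> a \<le> i\<close> by auto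
      ultimately show False using ij by simp
    qed
    then have "a \<le> j" using ij by simp
    then show "x \<in> (\<lambda>(i, j). (a + i, a + j)) ` {(i, j). i < j \<and> j < b \<and> \<tau> j < \<tau> i \<and> D (a + \<tau> i) \<and> D (a + \<tau> j)}"
    proof -
      have "(i - a, j - a) \<in> {(i, j). i < j \<and> j < b \<and> \<tau> j < \<tau> i \<and> D (a + \<tau> i) \<and> D (a + \<tau> j)}"
        using ij \<open>a \<le> i\<close> \<open>a \<le> j\<close> by (auto simp: sh_def)
      moreover have "x = (\<lambda>(i, j). (a + i, a + j)) (i - a, j - a)" using ij \<open>a \<le> i\<close> by simp
      ultimately show ?thesis by blast
    qed
  next
    fix x assume "x \<in> (\<lambda>(i, j). (a + i, a + j)) ` {(i, j). i < j \<and> j < b \<and> \<tau> j < \<tau> i \<and> D (a + \<tau> i) \<and> D (a + \<tau> j)}"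
    then show "x \<in> {(i, j). i < j \<and> j < a + b \<and> sh a b \<tau> j < sh a b \<tau> i \<and> D (sh a b \<tau> i) \<and> D (sh a b \<tau> j)}"
      by (auto simp: sh_def)
  qed
  moreover have "inj (\<lambda>(i::nat, j::nat). (a + i, a + j))" by (auto simp: inj_def)
  ultimately show ?thesis unfolding kzf_def by (simp add: card_image inj_on_subset[of _ UNIV])
qed

lemma kzf_adj:
  assumes "Suc j < N"
  shows "kzf D (Transposition.transpose j (Suc j)) N = (if D j \<and> D (Suc j) then -1 else 1)"
proof -
  let ?t = "Transposition.transpose j (Suc j)"
  have "{(i, l). i < l \<and> l < N \<and> ?t l < ?t i \<and> D (?t i) \<and> D (?t l)}
      = (if D j \<and> D (Suc j) then {(j, Suc j)} else {})"
    using assms by (auto simp: Transposition.transpose_def split: if_splits)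
  then show ?thesis by (simp add: kzf_def)
qed

definition om :: "nat \<Rightarrow> nat \<Rightarrow> (nat \<Rightarrow> nat) \<Rightarrow> smat list \<Rightarrow> complex" where
  "om p N \<sigma> Xs = of_int (sign \<sigma>) * koszul p N \<sigma> Xs"

lemma length_permute[simp]: "length (permute N \<sigma> Xs) = N"
  by (simp add: permute_def)

lemma nth_permute[simp]: "i < N \<Longrightarrow> permute N \<sigma> Xs ! i = Xs ! \<sigma> i"
  by (simp add: permute_def)

lemma perm_img: "\<sigma> permutes {..<N} \<Longrightarrow> i < N \<Longrightarrow> \<sigma> i < N"
  using permutes_in_image by fastforce

lemma permute_comp:
  assumes "\<sigma> permutes {..<N}" "\<tau> permutes {..<N}"
  shows "permute N (\<sigma> \<circ> \<tau>) Xs = permute N \<tau> (permute N \<sigma> Xs)"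
  by (rule nth_equalityI) (auto simp: perm_img[OF assms(2)])

lemma om_comp:
  assumes s: "\<sigma> permutes {..<N}" and r: "\<rho> permutes {..<N}"
  shows "om p N (\<sigma> \<circ> \<rho>) Xs = om p N \<sigma> Xs * om p N \<rho> (permute N \<sigma> Xs)"
proof -
  have "sign (\<sigma> \<circ> \<rho>) = sign \<sigma> * sign \<rho>"
    by (rule sign_compose) (use s r in \<open>auto simp: permutation_permutes\<close>)
  moreover have "koszul p N (\<sigma> \<circ> \<rho>) Xs = koszul p N \<sigma> Xs * koszul p N \<rho> (permute N \<sigma> Xs)"
  proof -
    have "kzf ((\<lambda>a. par p (Xs ! a) = 1) \<circ> \<sigma>) \<rho> N = kzf (\<lambda>a. par p (permute N \<sigma> Xs ! a) = 1) \<rho> N"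
      by (rule kzf_cong[OF r]) simp
    then show ?thesis unfolding koszul_kzf kzf_comp[OF s r] by simp
  qed
  ultimately show ?thesis by (simp add: om_def)
qed

lemma altz_om: "altz p N F Xs = (\<Sum>\<sigma>\<in>{\<sigma>. \<sigma> permutes {..<N}}. om p N \<sigma> Xs * F (permute N \<sigma> Xs))"
  by (simp add: altz_def om_def)

lemma altz_cong:
  assumes "\<And>\<sigma>. \<sigma> permutes {..<N} \<Longrightarrow> F (permute N \<sigma> Xs) = G (permute N \<sigma> Xs)"
  shows "altz p N F Xs = altz p N G Xs"
  unfolding altz_om by (rule sum.cong) (auto simp: assms)

lemma altz_inv:
  assumes r: "\<rho> permutes {..<N}"
  shows "altz p N (\<lambda>Ys. om p N \<rho> Ys * F (permute N \<rho> Ys)) Xs = altz p N F Xs"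
proof -
  have "altz p N F Xs = (\<Sum>\<sigma>\<in>{\<sigma>. \<sigma> permutes {..<N}}. om p N (\<sigma> \<circ> \<rho>) Xs * F (permute N (\<sigma> \<circ> \<rho>) Xs))"
    unfolding altz_om by (rule sum_permutations_compose_right[OF r])
  also have "\<dots> = altz p N (\<lambda>Ys. om p N \<rho> Ys * F (permute N \<rho> Ys)) Xs"
    unfolding altz_om
    by (rule sum.cong) (auto simp: om_comp[OF _ r] permute_comp[OF _ r])
  finally show ?thesis by simp
qed

lemma om_sh:
  assumes t: "\<tau> permutes {..<b}" and l: "length Us = a + b"
  shows "om p (a + b) (sh a b \<tau>) Us = om p b \<tau> (drop a Us)"
proof -
  have "of_int (sign (sh a b \<tau>)) = kzf (\<lambda>_. True) (sh a b \<tau>) (a + b)"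
    by (rule sign_kzf[OF sh_permutes[OF t]])
  also have "\<dots> = kzf (\<lambda>_. True) \<tau> b" using kzf_sh[OF t, of "\<lambda>_. True" a] by simp
  also have "\<dots> = of_int (sign \<tau>)" using sign_kzf[OF t] by simp
  finally have 1: "(of_int (sign (sh a b \<tau>)) :: complex) = of_int (sign \<tau>)" .
  have "koszul p (a + b) (sh a b \<tau>) Us = kzf (\<lambda>i. par p (Us ! (a + i)) = 1) \<tau> b"
    unfolding koszul_kzf by (rule kzf_sh[OF t])
  also have "\<dots> = koszul p b \<tau> (drop a Us)"
    unfolding koszul_kzf by (rule kzf_cong[OF t]) (use l in simp)
  finally show ?thesis using 1 by (simp add: om_def)
qed

lemma permute_sh:
  assumes t: "\<tau> permutes {..<b}" and l: "length Us = a + b"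
  shows "permute (a + b) (sh a b \<tau>) Us = take a Us @ permute b \<tau> (drop a Us)"
proof (rule nth_equalityI)
  show "length (permute (a + b) (sh a b \<tau>) Us) = length (take a Us @ permute b \<tau> (drop a Us))"
    using l by simp
  fix i assume "i < length (permute (a + b) (sh a b \<tau>) Us)"
  then have i: "i < a + b" by simp
  show "permute (a + b) (sh a b \<tau>) Us ! i = (take a Us @ permute b \<tau> (drop a Us)) ! i"
  proof (cases "i < a")
    case True then show ?thesis using i l by (simp add: sh_def nth_append)
  next
    case False
    then have "i - a < b" using i by simp
    then have "\<tau> (i - a) < b" using perm_img[OF t] by blast
    then show ?thesis using False i l by (simp add: sh_def nth_append)
  qed
qed

lemma altz_A:
  assumes l: "length X = a + b"
  shows "(\<Sum>\<sigma>\<in>{\<sigma>. \<sigma> permutes {..<a+b}}. om p (a+b) \<sigma> X *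
      (\<Sum>\<tau>\<in>{\<tau>. \<tau> permutes {..<b}}. om p b \<tau> (drop a (permute (a+b) \<sigma> X)) *
          F (take a (permute (a+b) \<sigma> X) @ permute b \<tau> (drop a (permute (a+b) \<sigma> X)))))
    = fact b * altz p (a+b) F X"
proof -
  have "(\<Sum>\<sigma>\<in>{\<sigma>. \<sigma> permutes {..<a+b}}. om p (a+b) \<sigma> X *
      (\<Sum>\<tau>\<in>{\<tau>. \<tau> permutes {..<b}}. om p b \<tau> (drop a (permute (a+b) \<sigma> X)) *
          F (take a (permute (a+b) \<sigma> X) @ permute b \<tau> (drop a (permute (a+b) \<sigma> X)))))
    = (\<Sum>\<sigma>\<in>{\<sigma>. \<sigma> permutes {..<a+b}}. \<Sum>\<tau>\<in>{\<tau>. \<tau> permutes {..<b}}. om p (a+b) \<sigma> X *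
         (om p (a+b) (sh a b \<tau>) (permute (a+b) \<sigma> X) * F (permute (a+b) (sh a b \<tau>) (permute (a+b) \<sigma> X))))"
    by (rule sum.cong[OF refl]) (simp add: sum_distrib_left om_sh permute_sh)
  also have "\<dots> = (\<Sum>\<tau>\<in>{\<tau>. \<tau> permutes {..<b}}. altz p (a+b) (\<lambda>Ys. om p (a+b) (sh a b \<tau>) Ys * F (permute (a+b) (sh a b \<tau>) Ys)) X)"
    unfolding altz_om by (rule sum.swap)
  also have "\<dots> = (\<Sum>\<tau>\<in>{\<tau>. \<tau> permutes {..<b}}. altz p (a+b) F X)"
    by (rule sum.cong[OF refl]) (simp add: altz_inv sh_permutes)
  also have "\<dots> = fact b * altz p (a+b) F X"
    by (simp add: card_permutations)
  finally show ?thesis .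
qed

definition hp :: "nat \<Rightarrow> smat \<Rightarrow> nat \<Rightarrow> bool" where
  "hp p A d \<longleftrightarrow> (\<forall>i j. A i j \<noteq> 0 \<longrightarrow> ((odd_idx p i \<noteq> odd_idx p j) \<longleftrightarrow> odd d))"

definition nz :: "smat \<Rightarrow> bool" where
  "nz A \<longleftrightarrow> (\<exists>i j. A i j \<noteq> 0)"

lemma par_le1: "par p A \<le> 1" by (simp add: par_def)

lemma par_cases: "par p A = 0 \<or> par p A = 1" by (simp add: par_def)

lemma homog_gl: "homog p q A \<Longrightarrow> A \<in> gl p q"
  by (auto simp: homog_def even_elt_def odd_elt_def)

lemma homog_hp: "homog p q A \<Longrightarrow> hp p A (par p A)"
  by (auto simp: homog_def even_elt_def odd_elt_def hp_def par_def)

lemma hp_par: "hp p A d \<Longrightarrow> nz A \<Longrightarrow> par p A = d mod 2"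
proof -
  assume h: "hp p A d" and n: "nz A"
  then obtain i j where ij: "A i j \<noteq> 0" by (auto simp: nz_def)
  show ?thesis
  proof (cases "odd d")
    case True
    then have "odd_idx p i \<noteq> odd_idx p j" using h ij by (auto simp: hp_def)
    then have "par p A = 1" using ij by (auto simp: par_def)
    then show ?thesis using True by presburger
  next
    case False
    then have "\<forall>i j. A i j \<noteq> 0 \<longrightarrow> odd_idx p i = odd_idx p j" using h by (auto simp: hp_def)
    then have "par p A = 0" by (simp add: par_def)
    then show ?thesis using False by presburger
  qed
qed

lemma hp_mod: "hp p A d \<longleftrightarrow> hp p A (d mod 2)"
  by (simp add: hp_def)

lemma hp_mmult: "hp p A a \<Longrightarrow> hp p B b \<Longrightarrow> hp p (mmult n A B) (a + b)"
  unfolding hp_def mmult_def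
proof (intro allI impI)
  fix i j assume A: "\<forall>i j. A i j \<noteq> 0 \<longrightarrow> (odd_idx p i \<noteq> odd_idx p j) = odd a"
    and B: "\<forall>i j. B i j \<noteq> 0 \<longrightarrow> (odd_idx p i \<noteq> odd_idx p j) = odd b"
    and ne: "(\<Sum>l<n. A i l * B l j) \<noteq> 0"
  then obtain l where "A i l * B l j \<noteq> 0" by (meson sum.neutral)
  then have "A i l \<noteq> 0" "B l j \<noteq> 0" by auto
  then show "(odd_idx p i \<noteq> odd_idx p j) = odd (a + b)" using A B by fastforce
qed

lemma hp_mone: "hp p (mone n) 0"
  by (simp add: hp_def mone_def)

lemma mprod_Cons: "mprod n (x # L) = mmult n x (mprod n L)"
  by (simp add: mprod_def)

lemma hp_mprod: "(\<And>i. i < length L \<Longrightarrow> hp p (L ! i) (h i)) \<Longrightarrow> hp p (mprod n L) (\<Sum>i<length L. h i)"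
proof (induction L arbitrary: h)
  case Nil then show ?case by (simp add: mprod_def hp_mone)
next
  case (Cons x L)
  have "hp p x (h 0)" using Cons.prems[of 0] by simp
  moreover have "hp p (mprod n L) (\<Sum>i<length L. h (Suc i))" using Cons.IH[of "\<lambda>i. h (Suc i)"] Cons.prems by fastforce
  ultimately have "hp p (mmult n x (mprod n L)) (h 0 + (\<Sum>i<length L. h (Suc i)))" by (rule hp_mmult)
  moreover have "(\<Sum>i<length (x # L). h i) = h 0 + (\<Sum>i<length L. h (Suc i))"
    by (simp only: length_Cons sum.lessThan_Suc_shift)
  ultimately show ?case by (simp only: mprod_Cons)
qed

lemma str_hp_odd: "hp p M d \<Longrightarrow> odd d \<Longrightarrow> str p q M = 0"
  unfolding str_def hp_def by (metis (no_types, lifting) sum.neutral diff_zero)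

lemma hp_sbracket: "hp p A a \<Longrightarrow> hp p B b \<Longrightarrow> hp p (sbracket p q A B) (a + b)"
proof -
  assume A: "hp p A a" and B: "hp p B b"
  have 1: "hp p (mmult (p+q) A B) (a + b)" using hp_mmult[OF A B] .
  have 2: "hp p (mmult (p+q) B A) (a + b)" using hp_mmult[OF B A] by (simp add: add.commute)
  show ?thesis using 1 2 unfolding hp_def sbracket_def by (metis diff_zero mult_zero_right)
qed

lemma gl_mmult: "A \<in> gl p q \<Longrightarrow> B \<in> gl p q \<Longrightarrow> mmult (p+q) A B \<in> gl p q"
  unfolding gl_def mmult_def by (auto intro: sum.neutral) (metis (mono_tags, lifting) mult_not_zero sum.neutral)+

lemma gl_sbracket: "A \<in> gl p q \<Longrightarrow> B \<in> gl p q \<Longrightarrow> sbracket p q A B \<in> gl p q"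
proof -
  assume A: "A \<in> gl p q" and B: "B \<in> gl p q"
  have "mmult (p+q) A B \<in> gl p q" "mmult (p+q) B A \<in> gl p q" using gl_mmult A B by auto
  then show ?thesis unfolding gl_def sbracket_def
    by (smt (verit, ccfv_threshold) diff_zero mem_Collect_eq mult_zero_right)
qed

lemma homog_of_hp: "A \<in> gl p q \<Longrightarrow> hp p A d \<Longrightarrow> homog p q A"
  unfolding homog_def even_elt_def odd_elt_def hp_def by auto

lemma homog_sbracket: "homog p q A \<Longrightarrow> homog p q B \<Longrightarrow> homog p q (sbracket p q A B)"
  by (meson gl_sbracket homog_gl homog_hp homog_of_hp hp_sbracket)

lemma elem_gl: "(a, b) \<in> basis_idx p q \<Longrightarrow> elem a b \<in> gl p q"
  by (auto simp: gl_def elem_def basis_idx_def)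

lemma elem_hp: "hp p (elem a b) (if bodd p (a, b) then 1 else 0)"
  by (auto simp: hp_def elem_def bodd_def)

lemma elem_nz: "nz (elem a b)"
  by (auto simp: nz_def elem_def)

lemma elem_homog: "(a, b) \<in> basis_idx p q \<Longrightarrow> homog p q (elem a b)"
  using homog_of_hp[OF elem_gl elem_hp] by blast

lemma par_elem: "par p (elem a b) = (if bodd p (a, b) then 1 else 0)"
  using hp_par[OF elem_hp elem_nz] by simp

lemma gl_expand:
  assumes "V \<in> gl p q"
  shows "V = (\<lambda>i j. \<Sum>ab\<in>basis_idx p q. V (fst ab) (snd ab) * elem (fst ab) (snd ab) i j)"
proof (intro ext)
  fix i j
  show "V i j = (\<Sum>ab\<in>basis_idx p q. V (fst ab) (snd ab) * elem (fst ab) (snd ab) i j)"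
  proof (cases "i < p + q \<and> j < p + q")
    case True
    have "(\<Sum>ab\<in>basis_idx p q. V (fst ab) (snd ab) * elem (fst ab) (snd ab) i j)
        = (\<Sum>ab\<in>{(i, j)}. V (fst ab) (snd ab) * elem (fst ab) (snd ab) i j)"
      by (rule sum.mono_neutral_right) (use True in \<open>auto simp: basis_idx_def elem_def\<close>)
    then show ?thesis by (simp add: elem_def)
  next
    case False
    then have "V i j = 0" using assms by (auto simp: gl_def)
    moreover have "\<And>ab. elem (fst ab) (snd ab) i j \<noteq> 0 \<Longrightarrow> ab \<notin> basis_idx p q"
      using False by (auto simp: elem_def basis_idx_def)
    ultimately show ?thesis by (metis (no_types, lifting) mult_zero_right sum.neutral)
  qed
qed

lemma finite_basis[simp]: "finite (basis_idx p q)"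
  by (simp add: basis_idx_def)

lemma mmult_lin_left:
  "mmult n (\<lambda>i j. \<Sum>a\<in>A. f a * M a i j) B = (\<lambda>i j. \<Sum>a\<in>A. f a * mmult n (M a) B i j)"
  unfolding mmult_def by (auto simp: sum_distrib_left sum_distrib_right mult.assoc intro!: ext sum.swap)

lemma mmult_lin_right:
  "mmult n B (\<lambda>i j. \<Sum>a\<in>A. f a * M a i j) = (\<lambda>i j. \<Sum>a\<in>A. f a * mmult n B (M a) i j)"
  unfolding mmult_def by (auto simp: sum_distrib_left sum_distrib_right mult.left_commute intro!: ext sum.swap)


lemma mprod_slot:
  "r < length L \<Longrightarrow> mprod n (L[r := (\<lambda>i j. \<Sum>a\<in>A. f a * M a i j)])
     = (\<lambda>i j. \<Sum>a\<in>A. f a * mprod n (L[r := M a]) i j)"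
proof (induction L arbitrary: r)
  case Nil then show ?case by simp
next
  case (Cons x L)
  show ?case
  proof (cases r)
    case 0 then show ?thesis by (simp add: mprod_Cons mmult_lin_left)
  next
    case (Suc r')
    then have "r' < length L" using Cons.prems by simp
    then show ?thesis using Suc by (simp add: mprod_Cons Cons.IH mmult_lin_right)
  qed
qed

lemma mprod_zero: "(\<lambda>i j. 0) \<in> set L \<Longrightarrow> mprod n L = (\<lambda>i j. 0)"
proof (induction L)
  case Nil then show ?case by simp
next
  case (Cons x L)
  then show ?case
    by (auto simp: mprod_Cons mmult_def)
qed

lemma mmult_assoc: "mmult n (mmult n A B) C = mmult n A (mmult n B C)"
  unfolding mmult_def
  by (auto intro!: ext simp: sum_distrib_left sum_distrib_right mult.assoc intro: sum.swap)

lemma mmult_mone_left: "A \<in> gl p q \<Longrightarrow> mmult (p+q) (mone (p+q)) A = A"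
proof (intro ext)
  fix i j assume A: "A \<in> gl p q"
  show "mmult (p + q) (mone (p + q)) A i j = A i j"
  proof (cases "i < p + q")
    case True
    have "(\<Sum>l<p+q. mone (p+q) i l * A l j) = (\<Sum>l\<in>{i}. mone (p+q) i l * A l j)"
      by (rule sum.mono_neutral_right) (use True in \<open>auto simp: mone_def\<close>)
    then show ?thesis by (simp add: mmult_def mone_def True)
  next
    case False
    have "A i j = 0" using A False unfolding gl_def by blast
    then show ?thesis using False by (simp add: mmult_def mone_def)
  qed
qed

lemma mmult_mone_right: "A \<in> gl p q \<Longrightarrow> mmult (p+q) A (mone (p+q)) = A"
proof (intro ext)
  fix i j assume A: "A \<in> gl p q"
  show "mmult (p + q) A (mone (p + q)) i j = A i j"
  proof (cases "j < p + q")
    case True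
    have "(\<Sum>l<p+q. A i l * mone (p+q) l j) = (\<Sum>l\<in>{j}. A i l * mone (p+q) l j)"
      by (rule sum.mono_neutral_right) (use True in \<open>auto simp: mone_def\<close>)
    then show ?thesis by (simp add: mmult_def mone_def True)
  next
    case False
    have "A i j = 0" using A False unfolding gl_def by blast
    then show ?thesis using False by (simp add: mmult_def mone_def)
  qed
qed

lemma mone_gl: "mone (p+q) \<in> gl p q" by (simp add: mone_def gl_def)

lemma mprod_gl: "(\<And>X. X \<in> set L \<Longrightarrow> X \<in> gl p q) \<Longrightarrow> mprod (p+q) L \<in> gl p q"
  by (induction L) (auto simp: mprod_Cons mone_gl gl_mmult, simp add: mprod_def mone_gl)

lemma mprod_append:
  "(\<And>X. X \<in> set B \<Longrightarrow> X \<in> gl p q) \<Longrightarrow> mprod (p+q) (A @ B) = mmult (p+q) (mprod (p+q) A) (mprod (p+q) B)"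
proof (induction A)
  case Nil then show ?case by (simp add: mprod_def[of _ "[]"] mmult_mone_left mprod_gl)
next
  case (Cons x A) then show ?case by (simp add: mprod_Cons mmult_assoc)
qed

lemma mprod_concat:
  "(\<And>X. X \<in> set (concat Ls) \<Longrightarrow> X \<in> gl p q) \<Longrightarrow> mprod (p+q) (concat Ls) = mprod (p+q) (map (mprod (p+q)) Ls)"
proof (induction Ls)
  case Nil then show ?case by simp
next
  case (Cons L Ls)
  have "mprod (p+q) (concat (L # Ls)) = mmult (p+q) (mprod (p+q) L) (mprod (p+q) (concat Ls))"
    using mprod_append[of "concat Ls" p q L] Cons.prems by simp
  then show ?case using Cons by (simp add: mprod_Cons)
qed

lemma str_lin: "str p q (\<lambda>i j. \<Sum>a\<in>A. f a * M a i j) = (\<Sum>a\<in>A. f a * str p q (M a))"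
  unfolding str_def by (simp add: sum_distrib_left right_diff_distrib sum_subtractf sum.swap[of _ A])

definition Pd :: "nat \<Rightarrow> nat \<Rightarrow> (nat \<Rightarrow> bool) \<Rightarrow> smat list \<Rightarrow> complex" where
  "Pd p q D Ws = str p q (\<lambda>i j. \<Sum>\<pi>\<in>{\<pi>. \<pi> permutes {..<length Ws}}.
      kzf D \<pi> (length Ws) * mprod (p+q) (permute (length Ws) \<pi> Ws) i j)"

lemma Pk_Pd: "length Ws = k \<Longrightarrow> Pk p q k Ws = Pd p q (\<lambda>a. par p (Ws ! a) = 1) Ws"
  by (simp add: Pk_def Pd_def koszul_kzf)

lemma Pd_alt: "Pd p q D Ws = (\<Sum>\<pi>\<in>{\<pi>. \<pi> permutes {..<length Ws}}.
      kzf D \<pi> (length Ws) * str p q (mprod (p+q) (permute (length Ws) \<pi> Ws)))"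
  unfolding Pd_def by (rule str_lin)

lemma Lamk_altz: "Lamk p q N Xs = altz p N (\<lambda>Zs. str p q (mprod (p+q) Zs)) Xs"
proof -
  have "Lamk p q N Xs = (\<Sum>\<sigma>\<in>{\<sigma>. \<sigma> permutes {..<N}}. (of_int (sign \<sigma>) * koszul p N \<sigma> Xs) *
      str p q (mprod (p+q) (permute N \<sigma> Xs)))"
    unfolding Lamk_def by (rule str_lin)
  then show ?thesis by (simp add: altz_def)
qed

lemma permute_update:
  assumes "\<pi> permutes {..<N}" "r < N" "length Ws = N"
  shows "permute N \<pi> (Ws[r := V]) = (permute N \<pi> Ws)[inv \<pi> r := V]"
proof (rule nth_equalityI)
  show "length (permute N \<pi> (Ws[r := V])) = length ((permute N \<pi> Ws)[inv \<pi> r := V])" by simp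
  fix i assume "i < length (permute N \<pi> (Ws[r := V]))"
  then have i: "i < N" by simp
  have "\<pi> i = r \<longleftrightarrow> i = inv \<pi> r" using assms(1)
    by (metis permutes_inverses(1) permutes_inverses(2))
  then show "permute N \<pi> (Ws[r := V]) ! i = (permute N \<pi> Ws)[inv \<pi> r := V] ! i"
    using i perm_img[OF assms(1) i] assms(3) by (auto simp: nth_list_update)
qed

lemma inv_img: "\<pi> permutes {..<N} \<Longrightarrow> r < N \<Longrightarrow> inv \<pi> r < N"
  using perm_img permutes_inv by blast

lemma Pd_slot:
  assumes r: "r < length Ws"
  shows "Pd p q D (Ws[r := (\<lambda>i j. \<Sum>a\<in>A. f a * M a i j)]) = (\<Sum>a\<in>A. f a * Pd p q D (Ws[r := M a]))"
proof -
  let ?N = "length Ws"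
  have "Pd p q D (Ws[r := (\<lambda>i j. \<Sum>a\<in>A. f a * M a i j)])
     = (\<Sum>\<pi>\<in>{\<pi>. \<pi> permutes {..<?N}}. kzf D \<pi> ?N * (\<Sum>a\<in>A. f a * str p q (mprod (p+q) (permute ?N \<pi> (Ws[r := M a])))))"
    unfolding Pd_alt length_list_update
  proof (rule sum.cong[OF refl])
    fix \<pi> assume "\<pi> \<in> {\<pi>. \<pi> permutes {..<?N}}"
    then have pi: "\<pi> permutes {..<?N}" by simp
    have ir: "inv \<pi> r < length (permute ?N \<pi> Ws)" using inv_img[OF pi r] by simp
    show "kzf D \<pi> ?N * str p q (mprod (p + q) (permute ?N \<pi> (Ws[r := \<lambda>i j. \<Sum>a\<in>A. f a * M a i j])))
        = kzf D \<pi> ?N * (\<Sum>a\<in>A. f a * str p q (mprod (p + q) (permute ?N \<pi> (Ws[r := M a]))))"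
      unfolding permute_update[OF pi r refl] mprod_slot[OF ir] str_lin by simp
  qed
  also have "\<dots> = (\<Sum>a\<in>A. f a * Pd p q D (Ws[r := M a]))"
    unfolding Pd_alt length_list_update
    by (simp add: sum_distrib_left sum_distrib_right mult.left_commute mult.assoc sum.swap[of _ A])
  finally show ?thesis .
qed

lemma not_nz: "\<not> nz A \<Longrightarrow> A = (\<lambda>i j. 0)"
  by (auto simp: nz_def)

lemma Pd_cong:
  assumes "\<And>i. i < length Ws \<Longrightarrow> nz (Ws ! i) \<Longrightarrow> D i = D' i"
  shows "Pd p q D Ws = Pd p q D' Ws"
proof (cases "\<forall>i < length Ws. nz (Ws ! i)")
  case True
  then show ?thesis unfolding Pd_alt
    by (intro sum.cong refl arg_cong2[where f="(*)"] kzf_cong) (use assms in auto)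
next
  case False
  then obtain i where i: "i < length Ws" "Ws ! i = (\<lambda>i j. 0)" using not_nz by blast
  have z: "\<And>\<pi>. \<pi> permutes {..<length Ws} \<Longrightarrow> mprod (p+q) (permute (length Ws) \<pi> Ws) = (\<lambda>i j. 0)"
  proof -
    fix \<pi> assume pi: "\<pi> permutes {..<length Ws}"
    have "permute (length Ws) \<pi> Ws ! inv \<pi> i = Ws ! i"
      using inv_img[OF pi i(1)] pi by (simp add: permutes_inverses(1))
    then have "(\<lambda>i j. 0) \<in> set (permute (length Ws) \<pi> Ws)"
      using inv_img[OF pi i(1)] i(2) by (metis length_permute nth_mem)
    then show "mprod (p+q) (permute (length Ws) \<pi> Ws) = (\<lambda>i j. 0)" by (rule mprod_zero)
  qed
  have "str p q (\<lambda>i j. 0) = 0" by (simp add: str_def)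
  then show ?thesis unfolding Pd_alt by (simp add: z)
qed

lemma Pd_odd:
  assumes "\<And>i. i < length Ws \<Longrightarrow> hp p (Ws ! i) (h i)" "odd (\<Sum>i<length Ws. h i)"
  shows "Pd p q D Ws = 0"
  unfolding Pd_alt
proof (rule sum.neutral, intro ballI)
  fix \<pi> assume "\<pi> \<in> {\<pi>. \<pi> permutes {..<length Ws}}"
  then have pi: "\<pi> permutes {..<length Ws}" by simp
  have "hp p (mprod (p+q) (permute (length Ws) \<pi> Ws)) (\<Sum>i<length Ws. h (\<pi> i))"
    using hp_mprod[of "permute (length Ws) \<pi> Ws" p "\<lambda>i. h (\<pi> i)" "p+q"] assms(1) perm_img[OF pi] by simp
  moreover have "(\<Sum>i<length Ws. h (\<pi> i)) = (\<Sum>i<length Ws. h i)"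
    using sum.permute[OF pi, of h] by (simp add: o_def)
  ultimately have "str p q (mprod (p+q) (permute (length Ws) \<pi> Ws)) = 0"
    using assms(2) str_hp_odd by metis
  then show "kzf D \<pi> (length Ws) * str p q (mprod (p + q) (permute (length Ws) \<pi> Ws)) = 0" by simp
qed

lemma parsum_sum: "parsum p Xs = (\<Sum>i<length Xs. par p (Xs ! i))"
  by (simp add: parsum_def sum_list_sum_nth atLeast0LessThan)

lemma Pk_odd:
  assumes "length Ws = k" "\<And>X. X \<in> set Ws \<Longrightarrow> homog p q X" "odd (parsum p Ws)"
  shows "Pk p q k Ws = 0"
  unfolding Pk_Pd[OF assms(1)]
  by (rule Pd_odd[where h = "\<lambda>i. par p (Ws ! i)"]) (use assms in \<open>auto simp: parsum_sum intro!: homog_hp[where q=q]\<close>)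

lemma Pk_slot:
  assumes l: "length Ws = k" and r: "r < k" and V: "homog p q V"
  shows "Pk p q k (Ws[r := V]) = (\<Sum>ab\<in>basis_idx p q. V (fst ab) (snd ab) * Pk p q k (Ws[r := elem (fst ab) (snd ab)]))"
proof -
  let ?D = "\<lambda>a. par p (Ws[r := V] ! a) = 1"
  have "Pk p q k (Ws[r := V]) = Pd p q ?D (Ws[r := V])" using l by (simp add: Pk_Pd)
  also have "\<dots> = Pd p q ?D (Ws[r := (\<lambda>i j. \<Sum>ab\<in>basis_idx p q. V (fst ab) (snd ab) * elem (fst ab) (snd ab) i j)])"
    using gl_expand[OF homog_gl[OF V]] by simp
  also have "\<dots> = (\<Sum>ab\<in>basis_idx p q. V (fst ab) (snd ab) * Pd p q ?D (Ws[r := elem (fst ab) (snd ab)]))"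
    by (rule Pd_slot) (use l r in simp)
  also have "\<dots> = (\<Sum>ab\<in>basis_idx p q. V (fst ab) (snd ab) * Pk p q k (Ws[r := elem (fst ab) (snd ab)]))"
  proof (rule sum.cong[OF refl])
    fix ab assume ab: "ab \<in> basis_idx p q"
    show "V (fst ab) (snd ab) * Pd p q ?D (Ws[r := elem (fst ab) (snd ab)]) =
          V (fst ab) (snd ab) * Pk p q k (Ws[r := elem (fst ab) (snd ab)])"
    proof (cases "V (fst ab) (snd ab) = 0")
      case True then show ?thesis by simp
    next
      case False
      have "par p V = (if bodd p ab then 1 else 0)"
      proof -
        have "nz V" using False by (auto simp: nz_def)
        then have "par p V = par p V mod 2" using hp_par[OF homog_hp[OF V]] by simp
        moreover have "(odd_idx p (fst ab) \<noteq> odd_idx p (snd ab)) \<longleftrightarrow> odd (par p V)"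
          using homog_hp[OF V] False by (auto simp: hp_def)
        ultimately show ?thesis using par_cases[of p V] by (auto simp: bodd_def)
      qed
      then have pe: "par p V = par p (elem (fst ab) (snd ab))" by (simp add: par_elem)
      have "Pd p q ?D (Ws[r := elem (fst ab) (snd ab)])
          = Pd p q (\<lambda>a. par p (Ws[r := elem (fst ab) (snd ab)] ! a) = 1) (Ws[r := elem (fst ab) (snd ab)])"
        by (rule Pd_cong) (use pe l r in \<open>auto simp: nth_list_update\<close>)
      then show ?thesis using l by (simp add: Pk_Pd)
    qed
  qed
  finally show ?thesis .
qed

lemma card_pairs_Cons:
  "card {(u, v). u < v \<and> v < length (x # L) \<and> R ((x # L) ! u) ((x # L) ! v)}
   = card {v. v < length L \<and> R x (L ! v)} + card {(u, v). u < v \<and> v < length L \<and> R (L ! u) (L ! v)}"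
proof -
  let ?A = "(\<lambda>v. (0::nat, Suc v)) ` {v. v < length L \<and> R x (L ! v)}"
  let ?B = "(\<lambda>(u, v). (Suc u, Suc v)) ` {(u, v). u < v \<and> v < length L \<and> R (L ! u) (L ! v)}"
  have eq: "{(u, v). u < v \<and> v < length (x # L) \<and> R ((x # L) ! u) ((x # L) ! v)} = ?A \<union> ?B"
  proof (rule set_eqI, rule iffI)
    fix z assume z: "z \<in> {(u, v). u < v \<and> v < length (x # L) \<and> R ((x # L) ! u) ((x # L) ! v)}"
    then obtain u v where uv: "z = (u, v)" "u < v" "v < Suc (length L)" "R ((x # L) ! u) ((x # L) ! v)" by auto
    then obtain v' where v': "v = Suc v'" by (cases v) auto
    show "z \<in> ?A \<union> ?B"
    proof (cases u)
      case 0 then show ?thesis using uv v' by auto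
    next
      case (Suc u')
      then have "(u', v') \<in> {(u, v). u < v \<and> v < length L \<and> R (L ! u) (L ! v)}" using uv v' by auto
      then show ?thesis using uv v' Suc by (auto simp: image_iff)
    qed
  next
    fix z assume "z \<in> ?A \<union> ?B" then show "z \<in> {(u, v). u < v \<and> v < length (x # L) \<and> R ((x # L) ! u) ((x # L) ! v)}"
      by auto
  qed
  have d: "?A \<inter> ?B = {}" by auto
  have fin1: "finite {v. v < length L \<and> R x (L ! v)}" by simp
  have fin2: "finite {(u, v). u < v \<and> v < length L \<and> R (L ! u) (L ! v)}"
    by (rule finite_subset[of _ "{..<length L} \<times> {..<length L}"]) auto
  have "card (?A \<union> ?B) = card ?A + card ?B"
    by (rule card_Un_disjoint) (use fin1 fin2 d in auto)
  moreover have "card ?A = card {v. v < length L \<and> R x (L ! v)}"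
    by (rule card_image) (auto simp: inj_on_def)
  moreover have "card ?B = card {(u, v). u < v \<and> v < length L \<and> R (L ! u) (L ! v)}"
    by (rule card_image) (auto simp: inj_on_def)
  ultimately show ?thesis using eq by simp
qed

definition cntodd :: "nat \<Rightarrow> (nat \<times> nat) list \<Rightarrow> nat" where
  "cntodd p idx = card {v. v < length idx \<and> bodd p (idx ! v)}"

definition csg :: "nat \<Rightarrow> (nat \<times> nat) list \<Rightarrow> complex" where
  "csg p idx = (-1) ^ card {(u, v). u < v \<and> v < length idx \<and> bodd p (idx ! u) \<and> bodd p (idx ! v)}"

lemma cntodd_filter: "cntodd p idx = length (filter (bodd p) idx)"
  by (simp add: cntodd_def length_filter_conv_card)

lemma cntodd_Cons: "cntodd p (ab # idx) = (if bodd p ab then 1 else 0) + cntodd p idx"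
  by (simp add: cntodd_filter)

lemma csg_Cons: "csg p (ab # idx) = (-1) ^ ((if bodd p ab then 1 else 0) * cntodd p idx) * csg p idx"
proof -
  have "card {v. v < length idx \<and> bodd p ab \<and> bodd p (idx ! v)} = (if bodd p ab then 1 else 0) * cntodd p idx"
    by (simp add: cntodd_def)
  then show ?thesis
    unfolding csg_def card_pairs_Cons[of _ _ "\<lambda>a b. bodd p a \<and> bodd p b"] by (simp add: power_add)
qed

definition wprod :: "nat \<Rightarrow> nat \<Rightarrow> (nat \<times> nat) list \<Rightarrow> smat list \<Rightarrow> complex" where
  "wprod p q idx Us = (\<Prod>i<length idx. - sbracket p q (Us ! (2 * i)) (Us ! (2 * i + 1)) (fst (idx ! i)) (snd (idx ! i)))"

lemma wprod_Cons:
  "wprod p q (ab # idx) (U0 # U1 # Us) = - sbracket p q U0 U1 (fst ab) (snd ab) * wprod p q idx Us"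
proof -
  have i1: "\<And>i. 2 * Suc i = Suc (Suc (2 * i))" by simp
  have i2: "\<And>i. 2 * Suc i + 1 = Suc (Suc (2 * i + 1))" by simp
  show ?thesis
    unfolding wprod_def length_Cons prod.lessThan_Suc_shift i1 i2 nth_Cons_Suc
    by simp
qed

lemma parsum_Cons: "parsum p (X # Xs) = par p X + parsum p Xs"
  by (simp add: parsum_def)

lemma wprod_deg:
  assumes "wprod p q idx Us \<noteq> 0" "length Us = 2 * length idx" "\<And>U. U \<in> set Us \<Longrightarrow> homog p q U"
  shows "even (parsum p Us + cntodd p idx)"
  using assms
proof (induction idx arbitrary: Us)
  case Nil then show ?case by (simp add: parsum_def cntodd_def)
next
  case (Cons ab idx)
  then obtain U0 U1 Us' where Us: "Us = U0 # U1 # Us'"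
    by (metis Suc_length_conv length_Cons mult_Suc_right add_2_eq_Suc)
  have ne: "sbracket p q U0 U1 (fst ab) (snd ab) \<noteq> 0" "wprod p q idx Us' \<noteq> 0"
    using Cons.prems(1) unfolding Us wprod_Cons by auto
  have "even (parsum p Us' + cntodd p idx)"
    using Cons.IH[OF ne(2)] Cons.prems(2,3) Us by auto
  moreover have "hp p (sbracket p q U0 U1) (par p U0 + par p U1)"
    using Cons.prems(3) Us by (auto intro!: hp_sbracket homog_hp[where q=q])
  then have "bodd p ab \<longleftrightarrow> odd (par p U0 + par p U1)"
    using ne(1) by (auto simp: hp_def bodd_def)
  ultimately show ?case unfolding Us by (auto simp: parsum_Cons cntodd_Cons)
qed

lemma parsum_permute:
  assumes "\<sigma> permutes {..<N}" "length Xs = N"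
  shows "parsum p (permute N \<sigma> Xs) = parsum p Xs"
proof -
  have "parsum p (permute N \<sigma> Xs) = (\<Sum>i<N. par p (Xs ! \<sigma> i))" by (simp add: parsum_sum)
  also have "\<dots> = (\<Sum>i<N. par p (Xs ! i))" using sum.permute[OF assms(1), of "\<lambda>i. par p (Xs ! i)"] by (simp add: o_def)
  finally show ?thesis using assms(2) by (simp add: parsum_sum)
qed

lemma altz_nonzero:
  assumes "altz p N F Zs \<noteq> 0"
  obtains \<sigma> where "\<sigma> permutes {..<N}" "F (permute N \<sigma> Zs) \<noteq> 0"
proof -
  have "\<exists>\<sigma>\<in>{\<sigma>. \<sigma> permutes {..<N}}. om p N \<sigma> Zs * F (permute N \<sigma> Zs) \<noteq> 0"
    using assms unfolding altz_om by (meson sum.neutral)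
  then show ?thesis using that by auto
qed

lemma homog_permute:
  assumes "\<sigma> permutes {..<N}" "length Xs = N" "\<And>X. X \<in> set Xs \<Longrightarrow> homog p q X"
  shows "\<And>X. X \<in> set (permute N \<sigma> Xs) \<Longrightarrow> homog p q X"
  using assms perm_img[OF assms(1)] by (auto simp: permute_def)

lemma dop_two: "dop p q (dualf x y) [A, B] = - sbracket p q A B x y"
  by (simp add: dop_def dualf_def parsum_def numeral_2_eq_2 lessThan_Suc)

lemma degpart_sum:
  "(\<Sum>g\<in>{0, 1::nat}. (-1) ^ (g * s) * c * degpart p g W Zs) =
     (if W Zs = 0 then 0 else (-1) ^ ((parsum p Zs mod 2) * s) * c * W Zs)"
proof (cases "even (parsum p Zs)")
  case True
  then have "parsum p Zs mod 2 = 0" by presburger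
  then show ?thesis using True by (simp add: degpart_def)
next
  case False
  then have "parsum p Zs mod 2 = 1" by presburger
  then show ?thesis using False by (simp add: degpart_def)
qed

lemma even_add_mod2: "even ((a::nat) + b) \<Longrightarrow> a mod 2 = b mod 2"
  by presburger

lemma m1pow_cong: "even a = even b \<Longrightarrow> (-1::complex) ^ a = (-1) ^ b"
  by (metis neg_one_even_power neg_one_odd_power)

lemma wedge_formula:
  assumes "length Zs = 2 * length idx" "\<And>Z. Z \<in> set Zs \<Longrightarrow> homog p q Z"
  shows "wedge_list p (map (\<lambda>(x, y). dop p q (dualf x y)) idx) Zs
     = csg p idx / 2 ^ length idx * altz p (2 * length idx) (wprod p q idx) Zs"
  using assms
proof (induction idx arbitrary: Zs)
  case Nil
  have "{\<sigma>. \<sigma> permutes ({}::nat set)} = {id}" by (auto simp: permutes_empty)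
  then show ?case by (simp add: altz_def csg_def wprod_def koszul_def)
next
  case (Cons ab idx)
  obtain a b where ab: "ab = (a, b)" by fastforce
  let ?l = "length idx"
  let ?W = "wedge_list p (map (\<lambda>(x, y). dop p q (dualf x y)) idx)"
  let ?al = "dop p q (dualf a b)"
  let ?bs = "if bodd p ab then 1 else 0"
  have N: "2 + 2 * ?l = 2 * length (ab # idx)" by simp
  have main: "boxt p 2 ?al ?W Us = (-1) ^ (?bs * cntodd p idx) * csg p idx / 2 ^ ?l *
      (\<Sum>\<tau>\<in>{\<tau>. \<tau> permutes {..<2 * ?l}}. om p (2 * ?l) \<tau> (drop 2 Us) *
          wprod p q (ab # idx) (take 2 Us @ permute (2 * ?l) \<tau> (drop 2 Us)))"
    if Us: "length Us = 2 + 2 * ?l" "\<And>U. U \<in> set Us \<Longrightarrow> homog p q U" for Us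
  proof -
    obtain U0 U1 Us' where U: "Us = U0 # U1 # Us'"
      using Us(1) by (metis Suc_length_conv add_2_eq_Suc)
    have lUs': "length Us' = 2 * ?l" using Us(1) U by simp
    have hUs': "\<And>U. U \<in> set Us' \<Longrightarrow> homog p q U" using Us(2) U by simp
    have IH: "?W Us' = csg p idx / 2 ^ ?l * altz p (2 * ?l) (wprod p q idx) Us'"
      by (rule Cons.IH[OF lUs' hUs'])
    have al: "?al [U0, U1] = - sbracket p q U0 U1 a b" by (rule dop_two)
    have sum_rw: "(\<Sum>\<tau>\<in>{\<tau>. \<tau> permutes {..<2 * ?l}}. om p (2 * ?l) \<tau> Us' *
          wprod p q (ab # idx) ([U0, U1] @ permute (2 * ?l) \<tau> Us'))
        = - sbracket p q U0 U1 a b * altz p (2 * ?l) (wprod p q idx) Us'"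
      unfolding altz_om sum_distrib_left
      by (rule sum.cong[OF refl]) (simp add: wprod_Cons ab)
    have t2: "take 2 Us = [U0, U1]" "drop 2 Us = Us'" using U by (simp_all add: numeral_2_eq_2)
    have ps2: "parsum p [U0, U1] = par p U0 + par p U1" by (simp add: parsum_def)
    have box: "boxt p 2 ?al ?W Us = (if ?W Us' = 0 then 0 else
         (-1) ^ ((parsum p Us' mod 2) * (par p U0 + par p U1)) * ?al [U0, U1] * ?W Us')"
      unfolding boxt_def t2 ps2 by (rule degpart_sum)
    show ?thesis
    proof (cases "?W Us' = 0 \<or> sbracket p q U0 U1 a b = 0")
      case True
      have csg0: "csg p idx \<noteq> 0" by (simp add: csg_def)
      have "boxt p 2 ?al ?W Us = 0" using box True al by auto
      moreover have "sbracket p q U0 U1 a b * altz p (2 * ?l) (wprod p q idx) Us' = 0"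
        using True IH csg0 by auto
      ultimately show ?thesis unfolding t2 using sum_rw by simp
    next
      case False
      then have ne1: "altz p (2 * ?l) (wprod p q idx) Us' \<noteq> 0" using IH by auto
      then obtain \<tau> where tau: "\<tau> permutes {..<2 * ?l}" "wprod p q idx (permute (2 * ?l) \<tau> Us') \<noteq> 0"
        by (rule altz_nonzero)
      have "even (parsum p (permute (2 * ?l) \<tau> Us') + cntodd p idx)"
        by (rule wprod_deg[OF tau(2)]) (use homog_permute[OF tau(1) lUs' hUs'] in auto)
      then have e1: "parsum p Us' mod 2 = cntodd p idx mod 2"
        using parsum_permute[OF tau(1) lUs', of p] even_add_mod2 by metis
      have "hp p (sbracket p q U0 U1) (par p U0 + par p U1)"
        using Us(2) U by (auto intro!: hp_sbracket homog_hp[where q=q])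
      then have e2: "bodd p (a, b) \<longleftrightarrow> odd (par p U0 + par p U1)"
        using False by (auto simp: hp_def bodd_def)
      have "(-1::complex) ^ ((parsum p Us' mod 2) * (par p U0 + par p U1)) = (-1) ^ (?bs * cntodd p idx)"
      proof (rule m1pow_cong)
        have "even (parsum p Us' mod 2) \<longleftrightarrow> even (cntodd p idx)" using e1 by presburger
        then show "even (parsum p Us' mod 2 * (par p U0 + par p U1)) = even (?bs * cntodd p idx)"
          using e2 ab by auto
      qed
      then show ?thesis unfolding box al t2 using sum_rw IH False by (simp add: mult.assoc)
    qed
  qed
  have "wedge_list p (map (\<lambda>(x, y). dop p q (dualf x y)) (ab # idx)) Zs
      = altz p (2 + 2 * ?l) (boxt p 2 ?al ?W) Zs / (fact 2 * fact (2 * ?l))"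
    by (simp add: ab swedge_def)
  also have "altz p (2 + 2 * ?l) (boxt p 2 ?al ?W) Zs
      = (\<Sum>\<sigma>\<in>{\<sigma>. \<sigma> permutes {..<2 + 2 * ?l}}. (-1) ^ (?bs * cntodd p idx) * csg p idx / 2 ^ ?l *
         (om p (2 + 2 * ?l) \<sigma> Zs *
         (\<Sum>\<tau>\<in>{\<tau>. \<tau> permutes {..<2 * ?l}}. om p (2 * ?l) \<tau> (drop 2 (permute (2 + 2 * ?l) \<sigma> Zs)) *
          wprod p q (ab # idx) (take 2 (permute (2 + 2 * ?l) \<sigma> Zs) @ permute (2 * ?l) \<tau> (drop 2 (permute (2 + 2 * ?l) \<sigma> Zs))))))"
    unfolding altz_om
  proof (rule sum.cong[OF refl])
    fix \<sigma> assume "\<sigma> \<in> {\<sigma>. \<sigma> permutes {..<2 + 2 * ?l}}"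
    then have s: "\<sigma> permutes {..<2 + 2 * ?l}" by simp
    have l: "length Zs = 2 + 2 * ?l" using Cons.prems(1) by simp
    show "om p (2 + 2 * ?l) \<sigma> Zs * boxt p 2 ?al ?W (permute (2 + 2 * ?l) \<sigma> Zs) =
        (-1) ^ (?bs * cntodd p idx) * csg p idx / 2 ^ ?l *
        (om p (2 + 2 * ?l) \<sigma> Zs *
         (\<Sum>\<tau>\<in>{\<tau>. \<tau> permutes {..<2 * ?l}}. om p (2 * ?l) \<tau> (drop 2 (permute (2 + 2 * ?l) \<sigma> Zs)) *
          wprod p q (ab # idx) (take 2 (permute (2 + 2 * ?l) \<sigma> Zs) @ permute (2 * ?l) \<tau> (drop 2 (permute (2 + 2 * ?l) \<sigma> Zs)))))"
      by (subst main) (use homog_permute[OF s l Cons.prems(2)] l in \<open>auto intro: mult.left_commute\<close>)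
  qed
  also have "\<dots> = (-1) ^ (?bs * cntodd p idx) * csg p idx / 2 ^ ?l *
        (\<Sum>\<sigma>\<in>{\<sigma>. \<sigma> permutes {..<2 + 2 * ?l}}. om p (2 + 2 * ?l) \<sigma> Zs *
         (\<Sum>\<tau>\<in>{\<tau>. \<tau> permutes {..<2 * ?l}}. om p (2 * ?l) \<tau> (drop 2 (permute (2 + 2 * ?l) \<sigma> Zs)) *
          wprod p q (ab # idx) (take 2 (permute (2 + 2 * ?l) \<sigma> Zs) @ permute (2 * ?l) \<tau> (drop 2 (permute (2 + 2 * ?l) \<sigma> Zs)))))"
    by (rule sum_distrib_left[symmetric])
  also have "\<dots> = (-1) ^ (?bs * cntodd p idx) * csg p idx / 2 ^ ?l * (fact (2 * ?l) * altz p (2 + 2 * ?l) (wprod p q (ab # idx)) Zs)"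
    using altz_A[of Zs 2 "2 * ?l" p "wprod p q (ab # idx)"] Cons.prems(1) by simp
  finally show ?case
    by (simp add: csg_Cons ab N[symmetric] mult_ac)
qed

definition LS :: "nat \<Rightarrow> nat \<Rightarrow> nat \<Rightarrow> (nat \<times> nat) list set" where
  "LS p q m = {idx. length idx = m \<and> set idx \<subseteq> basis_idx p q}"

lemma finite_LS[simp]: "finite (LS p q m)"
proof -
  have "LS p q m = {xs. set xs \<subseteq> basis_idx p q \<and> length xs = m}" by (auto simp: LS_def)
  then show ?thesis using finite_lists_length_eq[OF finite_basis] by simp
qed

lemma LS_Suc: "LS p q (Suc m) = (\<lambda>(a, l). a # l) ` (basis_idx p q \<times> LS p q m)"
  unfolding LS_def by (auto simp: length_Suc_conv image_iff)

lemma sum_LS_Suc: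
  "(\<Sum>idx\<in>LS p q (Suc m). f idx) = (\<Sum>a\<in>basis_idx p q. \<Sum>l\<in>LS p q m. f (a # l))"
proof -
  have "inj_on (\<lambda>(a, l). a # l) (basis_idx p q \<times> LS p q m)" by (auto simp: inj_on_def)
  then have "(\<Sum>idx\<in>LS p q (Suc m). f idx) = (\<Sum>x\<in>basis_idx p q \<times> LS p q m. f ((\<lambda>(a, l). a # l) x))"
    unfolding LS_Suc by (rule sum.reindex[unfolded o_def])
  also have "\<dots> = (\<Sum>a\<in>basis_idx p q. \<Sum>l\<in>LS p q m. f (a # l))"
    by (subst sum.cartesian_product) (simp add: split_def)
  finally show ?thesis .
qed

definition LinF :: "nat \<Rightarrow> nat \<Rightarrow> (smat list \<Rightarrow> complex) \<Rightarrow> nat \<Rightarrow> bool" where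
  "LinF p q F m \<longleftrightarrow> (\<forall>Ws r V. length Ws = m \<longrightarrow> r < m \<longrightarrow> homog p q V \<longrightarrow>
      F (Ws[r := V]) = (\<Sum>ab\<in>basis_idx p q. V (fst ab) (snd ab) * F (Ws[r := elem (fst ab) (snd ab)])))"

lemma LinF_Cons:
  assumes "LinF p q F (Suc m)"
  shows "LinF p q (\<lambda>Ws. F (X # Ws)) m"
  unfolding LinF_def
proof (intro allI impI)
  fix Ws :: "smat list" and r V assume "length Ws = m" "r < m" "homog p q V"
  then have "F ((X # Ws)[Suc r := V]) = (\<Sum>ab\<in>basis_idx p q. V (fst ab) (snd ab) * F ((X # Ws)[Suc r := elem (fst ab) (snd ab)]))"
    using assms[unfolded LinF_def, rule_format, of "X # Ws" "Suc r" V] by simp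
  then show "F (X # Ws[r := V]) = (\<Sum>ab\<in>basis_idx p q. V (fst ab) (snd ab) * F (X # Ws[r := elem (fst ab) (snd ab)]))"
    by simp
qed

lemma expand:
  assumes "LinF p q F m" "length Vs = m" "\<And>V. V \<in> set Vs \<Longrightarrow> homog p q V"
  shows "(\<Sum>idx\<in>LS p q m. F (map (\<lambda>(x, y). elem x y) idx) * (\<Prod>i<m. (Vs ! i) (fst (idx ! i)) (snd (idx ! i)))) = F Vs"
  using assms
proof (induction m arbitrary: F Vs)
  case 0
  have "LS p q 0 = {[]}" by (auto simp: LS_def)
  then show ?case using 0 by simp
next
  case (Suc m)
  obtain V0 Vs' where Vs: "Vs = V0 # Vs'" using Suc.prems(2) by (metis Suc_length_conv)
  have lVs': "length Vs' = m" using Suc.prems(2) Vs by simp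
  have hV0: "homog p q V0" using Suc.prems(3) Vs by simp
  have hVs': "\<And>V. V \<in> set Vs' \<Longrightarrow> homog p q V" using Suc.prems(3) Vs by simp
  have "(\<Sum>idx\<in>LS p q (Suc m). F (map (\<lambda>(x, y). elem x y) idx) * (\<Prod>i<Suc m. (Vs ! i) (fst (idx ! i)) (snd (idx ! i))))
      = (\<Sum>a\<in>basis_idx p q. V0 (fst a) (snd a) * (\<Sum>l\<in>LS p q m. F (elem (fst a) (snd a) # map (\<lambda>(x, y). elem x y) l) *
            (\<Prod>i<m. (Vs' ! i) (fst (l ! i)) (snd (l ! i)))))"
    unfolding sum_LS_Suc prod.lessThan_Suc_shift
    by (rule sum.cong[OF refl]) (simp add: Vs sum_distrib_left mult_ac split_def)
  also have "\<dots> = (\<Sum>a\<in>basis_idx p q. V0 (fst a) (snd a) * F (elem (fst a) (snd a) # Vs'))"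
  proof (rule sum.cong[OF refl])
    fix a
    have "LinF p q (\<lambda>Ws. F (elem (fst a) (snd a) # Ws)) m" using LinF_Cons[OF Suc.prems(1)] .
    from Suc.IH[OF this lVs' hVs']
    show "V0 (fst a) (snd a) * (\<Sum>l\<in>LS p q m. F (elem (fst a) (snd a) # map (\<lambda>(x, y). elem x y) l) *
            (\<Prod>i<m. (Vs' ! i) (fst (l ! i)) (snd (l ! i)))) = V0 (fst a) (snd a) * F (elem (fst a) (snd a) # Vs')"
      by simp
  qed
  also have "\<dots> = F ((V0 # Vs')[0 := V0])"
    using Suc.prems(1)[unfolded LinF_def, rule_format, of "V0 # Vs'" 0 V0] hV0 lVs' by simp
  finally show ?case using Vs by simp
qed

definition brk :: "nat \<Rightarrow> nat \<Rightarrow> nat \<Rightarrow> smat list \<Rightarrow> smat list" where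
  "brk p q m Us = map (\<lambda>i. sbracket p q (Us ! (2 * i)) (Us ! (2 * i + 1))) [0..<m]"

lemma length_brk[simp]: "length (brk p q m Us) = m" by (simp add: brk_def)

lemma nth_brk[simp]: "i < m \<Longrightarrow> brk p q m Us ! i = sbracket p q (Us ! (2 * i)) (Us ! (2 * i + 1))"
  by (simp add: brk_def)

lemma homog_brk:
  assumes "length Us = 2 * m" "\<And>U. U \<in> set Us \<Longrightarrow> homog p q U"
  shows "\<And>V. V \<in> set (brk p q m Us) \<Longrightarrow> homog p q V"
proof -
  fix V assume "V \<in> set (brk p q m Us)"
  then obtain i where i: "i < m" "V = sbracket p q (Us ! (2 * i)) (Us ! (2 * i + 1))" by (auto simp: brk_def)
  have "Us ! (2 * i) \<in> set Us" "Us ! (2 * i + 1) \<in> set Us" using i assms(1) by auto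
  then show "homog p q V" using i assms(2) homog_sbracket by blast
qed

lemma prod_neg: "(\<Prod>i<m. - (f i :: complex)) = (-1) ^ m * (\<Prod>i<m. f i)"
  by (induction m) auto

lemma altz_sum:
  "(\<Sum>a\<in>A. c a * altz p N (G a) Zs) = altz p N (\<lambda>Us. \<Sum>a\<in>A. c a * G a Us) Zs"
  unfolding altz_om by (simp add: sum_distrib_left mult_ac sum.swap[of _ A])

lemma smap_formula:
  assumes F: "LinF p q F m" and l: "length Zs = 2 * m" and h: "\<And>Z. Z \<in> set Zs \<Longrightarrow> homog p q Z"
  shows "smap p q m F Zs = (-1) ^ m / (fact m * 2 ^ m) * altz p (2 * m) (\<lambda>Us. F (brk p q m Us)) Zs"
proof -
  have "smap p q m F Zs = (\<Sum>idx\<in>LS p q m. csg p idx * F (map (\<lambda>(x, y). elem x y) idx) *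
      (csg p idx / 2 ^ m * altz p (2 * m) (wprod p q idx) Zs)) / fact m"
    unfolding smap_def LS_def[symmetric]
  proof (rule arg_cong[where f="\<lambda>x. x / fact m"], rule sum.cong[OF refl])
    fix idx assume "idx \<in> LS p q m"
    then have li: "length idx = m" by (simp add: LS_def)
    show "(-1) ^ card {(u, v). u < v \<and> v < m \<and> bodd p (idx ! u) \<and> bodd p (idx ! v)} * F (map (\<lambda>(x, y). elem x y) idx) *
        wedge_list p (map (\<lambda>(x, y). dop p q (dualf x y)) idx) Zs =
        csg p idx * F (map (\<lambda>(x, y). elem x y) idx) * (csg p idx / 2 ^ m * altz p (2 * m) (wprod p q idx) Zs)"
      using wedge_formula[of Zs idx p q] l h li by (simp add: csg_def)
  qed
  also have "\<dots> = (\<Sum>idx\<in>LS p q m. F (map (\<lambda>(x, y). elem x y) idx) * altz p (2 * m) (wprod p q idx) Zs) / (fact m * 2 ^ m)"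
  proof -
    have cc: "\<And>idx x. csg p idx * (csg p idx * x) = x"
    proof -
      fix idx and x :: complex
      have "csg p idx * csg p idx = 1" unfolding csg_def by (simp add: power_mult_distrib[symmetric])
      then show "csg p idx * (csg p idx * x) = x" by (metis mult.assoc mult_1)
    qed
    show ?thesis
      by (simp add: sum_divide_distrib[symmetric] cc mult_ac)
  qed
  also have "(\<Sum>idx\<in>LS p q m. F (map (\<lambda>(x, y). elem x y) idx) * altz p (2 * m) (wprod p q idx) Zs)
      = altz p (2 * m) (\<lambda>Us. \<Sum>idx\<in>LS p q m. F (map (\<lambda>(x, y). elem x y) idx) * wprod p q idx Us) Zs"
    by (rule altz_sum)
  also have "\<dots> = altz p (2 * m) (\<lambda>Us. (-1) ^ m * F (brk p q m Us)) Zs"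
  proof (rule altz_cong)
    fix \<sigma> assume s: "\<sigma> permutes {..<2 * m}"
    let ?Us = "permute (2 * m) \<sigma> Zs"
    have hU: "\<And>U. U \<in> set ?Us \<Longrightarrow> homog p q U" by (rule homog_permute[OF s l h])
    have hb: "\<And>V. V \<in> set (brk p q m ?Us) \<Longrightarrow> homog p q V" using homog_brk[of ?Us m p q] hU by simp
    have ex: "(\<Sum>idx\<in>LS p q m. F (map (\<lambda>(x, y). elem x y) idx) *
             (\<Prod>i<m. (brk p q m ?Us ! i) (fst (idx ! i)) (snd (idx ! i)))) = F (brk p q m ?Us)"
      by (rule expand[OF F length_brk hb])
    have "(\<Sum>idx\<in>LS p q m. F (map (\<lambda>(x, y). elem x y) idx) * wprod p q idx ?Us)
        = (-1) ^ m * (\<Sum>idx\<in>LS p q m. F (map (\<lambda>(x, y). elem x y) idx) *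
             (\<Prod>i<m. (brk p q m ?Us ! i) (fst (idx ! i)) (snd (idx ! i))))"
      unfolding sum_distrib_left
      by (rule sum.cong[OF refl]) (simp add: wprod_def LS_def prod_neg mult_ac)
    then show "(\<Sum>idx\<in>LS p q m. F (map (\<lambda>(x, y). elem x y) idx) * wprod p q idx ?Us) = (-1) ^ m * F (brk p q m ?Us)"
      unfolding ex .
  qed
  also have "\<dots> = (-1) ^ m * altz p (2 * m) (\<lambda>Us. F (brk p q m Us)) Zs"
    unfolding altz_om by (simp add: sum_distrib_left mult_ac)
  finally show ?thesis by simp
qed

lemma smap_cong:
  assumes "\<And>idx. idx \<in> LS p q m \<Longrightarrow> F (map (\<lambda>(x, y). elem x y) idx) = F' (map (\<lambda>(x, y). elem x y) idx)"
  shows "smap p q m F Zs = smap p q m F' Zs"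
  unfolding smap_def LS_def[symmetric] using assms by (intro arg_cong[where f="\<lambda>x. x / fact m"] sum.cong) auto

lemma smap_lin:
  "(\<Sum>a\<in>A. c a * smap p q m (F a) Zs) = smap p q m (\<lambda>Ws. \<Sum>a\<in>A. c a * F a Ws) Zs"
  unfolding smap_def
  by (simp add: sum_divide_distrib[symmetric] sum_distrib_left sum_distrib_right mult_ac sum.swap[of _ A])

lemma LS_homog: "idx \<in> LS p q m \<Longrightarrow> X \<in> set (map (\<lambda>(x, y). elem x y) idx) \<Longrightarrow> homog p q X"
  by (auto simp: LS_def elem_homog)

lemma Dop_eq:
  assumes "length (X # Ws) = k" "\<And>W. W \<in> set (X # Ws) \<Longrightarrow> homog p q W"
  shows "Dop p X (Pk p q k) Ws = Pk p q k (X # Ws)"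
proof (cases "even (parsum p (X # Ws))")
  case True then show ?thesis by (simp add: Dop_def degpart_def)
next
  case False
  have od: "odd (parsum p (X # Ws))" using False by simp
  have "Pk p q k (X # Ws) = 0" using Pk_odd[OF assms(1) assms(2) od] by simp
  then show ?thesis by (simp add: Dop_def degpart_def)
qed

lemma LinF_Pk:
  assumes "homog p q Y0"
  shows "LinF p q (\<lambda>Ws. Pk p q (Suc m) (Y0 # Ws)) m"
  unfolding LinF_def
proof (intro allI impI)
  fix Ws :: "smat list" and r V assume "length Ws = m" "r < m" "homog p q V"
  then have "Pk p q (Suc m) ((Y0 # Ws)[Suc r := V]) =
     (\<Sum>ab\<in>basis_idx p q. V (fst ab) (snd ab) * Pk p q (Suc m) ((Y0 # Ws)[Suc r := elem (fst ab) (snd ab)]))"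
    by (intro Pk_slot) auto
  then show "Pk p q (Suc m) (Y0 # Ws[r := V]) =
     (\<Sum>ab\<in>basis_idx p q. V (fst ab) (snd ab) * Pk p q (Suc m) (Y0 # Ws[r := elem (fst ab) (snd ab)]))"
    by simp
qed

lemma sum_pairs: "(\<Sum>i<2 * (m::nat). f i) = (\<Sum>i<m. f (2 * i) + (f (2 * i + 1) :: 'a::comm_monoid_add))"
  by (induction m) (auto simp: numeral_2_eq_2 add_ac)

lemma parsum_pairs:
  "length Us = 2 * m \<Longrightarrow> parsum p Us = (\<Sum>i<m. par p (Us ! (2 * i)) + par p (Us ! (2 * i + 1)))"
  by (simp add: parsum_sum sum_pairs)

lemma P_brk_deg:
  assumes "Pk p q (Suc m) (Y0 # brk p q m Us) \<noteq> 0" "homog p q Y0" "length Us = 2 * m"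
    "\<And>U. U \<in> set Us \<Longrightarrow> homog p q U"
  shows "even (par p Y0 + parsum p Us)"
proof (rule ccontr)
  assume od: "\<not> even (par p Y0 + parsum p Us)"
  let ?h = "\<lambda>i. if i = 0 then par p Y0 else par p (Us ! (2 * (i - 1))) + par p (Us ! (2 * (i - 1) + 1))"
  have "Pk p q (Suc m) (Y0 # brk p q m Us) = Pd p q (\<lambda>a. par p ((Y0 # brk p q m Us) ! a) = 1) (Y0 # brk p q m Us)"
    by (rule Pk_Pd) simp
  also have "\<dots> = 0"
  proof (rule Pd_odd[where h = ?h])
    fix i assume i: "i < length (Y0 # brk p q m Us)"
    show "hp p ((Y0 # brk p q m Us) ! i) (?h i)"
    proof (cases i)
      case 0 then show ?thesis using homog_hp[OF assms(2)] by simp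
    next
      case (Suc j)
      then have j: "j < m" using i by simp
      have "Us ! (2 * j) \<in> set Us" "Us ! (2 * j + 1) \<in> set Us" using j assms(3) by auto
      then show ?thesis using Suc j assms(4) by (auto intro!: hp_sbracket homog_hp[where q=q])
    qed
  next
    have "(\<Sum>i<length (Y0 # brk p q m Us). ?h i) = par p Y0 + (\<Sum>i<m. ?h (Suc i))"
      by (simp add: sum.lessThan_Suc_shift del: sum.lessThan_Suc)
    also have "\<dots> = par p Y0 + parsum p Us" using parsum_pairs[OF assms(3)] by simp
    finally show "odd (\<Sum>i<length (Y0 # brk p q m Us). ?h i)" using od by simp
  qed
  finally show False using assms(1) by simp
qed

lemma T1p:
  assumes l: "length Ys = Suc (2 * m)" and h: "\<And>Y. Y \<in> set Ys \<Longrightarrow> homog p q Y"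
  shows "(\<Sum>ab\<in>basis_idx p q. (if bodd p ab then -1 else 1) *
      boxt p 1 (dualf (fst ab) (snd ab)) (smap p q m (Dop p (elem (fst ab) (snd ab)) (Pk p q (Suc m)))) Ys)
    = smap p q m (\<lambda>Ws. Pk p q (Suc m) (hd Ys # Ws)) (tl Ys)"
proof -
  obtain Y0 Zs where Ys: "Ys = Y0 # Zs" using l by (cases Ys) auto
  have hY0: "homog p q Y0" using h Ys by simp
  have hZs: "\<And>Z. Z \<in> set Zs \<Longrightarrow> homog p q Z" using h Ys by simp
  have lZs: "length Zs = 2 * m" using l Ys by simp
  let ?P = "Pk p q (Suc m)"
  let ?G = "\<lambda>ab. smap p q m (Dop p (elem (fst ab) (snd ab)) ?P)"
  let ?G' = "smap p q m (\<lambda>Ws. ?P (Y0 # Ws))"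
  let ?e = "(-1::complex) ^ ((parsum p Zs mod 2) * par p Y0)"
  have G: "?G ab Zs = smap p q m (\<lambda>Ws. ?P (elem (fst ab) (snd ab) # Ws)) Zs" if ab: "ab \<in> basis_idx p q" for ab
  proof (rule smap_cong)
    fix idx assume idx: "idx \<in> LS p q m"
    show "Dop p (elem (fst ab) (snd ab)) ?P (map (\<lambda>(x, y). elem x y) idx) = ?P (elem (fst ab) (snd ab) # map (\<lambda>(x, y). elem x y) idx)"
      by (rule Dop_eq) (use idx ab LS_homog[OF idx] elem_homog in \<open>auto simp: LS_def\<close>)
  qed
  have box: "boxt p 1 (dualf a b) G Ys = ?e * Y0 a b * G Zs" for a b G
  proof -
    have t1: "take 1 Ys = [Y0]" "drop 1 Ys = Zs" "parsum p [Y0] = par p Y0" using Ys by (simp_all add: parsum_def)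
    have "boxt p 1 (dualf a b) G Ys = (if G Zs = 0 then 0 else ?e * dualf a b [Y0] * G Zs)"
      unfolding boxt_def t1 by (rule degpart_sum)
    then show ?thesis by (simp add: dualf_def)
  qed
  have sg: "(if bodd p ab then -1 else 1) * Y0 (fst ab) (snd ab) = (-1) ^ par p Y0 * Y0 (fst ab) (snd ab)" for ab
  proof (cases "Y0 (fst ab) (snd ab) = 0")
    case True then show ?thesis by simp
  next
    case False
    have "nz Y0" using False by (auto simp: nz_def)
    then have "par p Y0 = par p Y0 mod 2" using hp_par[OF homog_hp[OF hY0]] by simp
    moreover have "bodd p ab \<longleftrightarrow> odd (par p Y0)"
      using homog_hp[OF hY0] False by (auto simp: hp_def bodd_def)
    ultimately show ?thesis using par_cases[of p Y0] by auto
  qed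
  have "(\<Sum>ab\<in>basis_idx p q. (if bodd p ab then -1 else 1) * boxt p 1 (dualf (fst ab) (snd ab)) (?G ab) Ys)
      = ?e * (-1) ^ par p Y0 * (\<Sum>ab\<in>basis_idx p q. Y0 (fst ab) (snd ab) * smap p q m (\<lambda>Ws. ?P (elem (fst ab) (snd ab) # Ws)) Zs)"
    unfolding sum_distrib_left
  proof (rule sum.cong[OF refl])
    fix ab assume ab: "ab \<in> basis_idx p q"
    have "(if bodd p ab then -1 else 1) * boxt p 1 (dualf (fst ab) (snd ab)) (?G ab) Ys
        = ?e * ((if bodd p ab then -1 else 1) * Y0 (fst ab) (snd ab)) * ?G ab Zs"
      unfolding box by (simp add: mult_ac)
    also have "\<dots> = ?e * (-1) ^ par p Y0 * (Y0 (fst ab) (snd ab) * smap p q m (\<lambda>Ws. ?P (elem (fst ab) (snd ab) # Ws)) Zs)"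
      unfolding sg G[OF ab] by (simp add: mult_ac)
    finally show "(if bodd p ab then -1 else 1) * boxt p 1 (dualf (fst ab) (snd ab)) (?G ab) Ys
        = ?e * (-1) ^ par p Y0 * (Y0 (fst ab) (snd ab) * smap p q m (\<lambda>Ws. ?P (elem (fst ab) (snd ab) # Ws)) Zs)" .
  qed
  also have "(\<Sum>ab\<in>basis_idx p q. Y0 (fst ab) (snd ab) * smap p q m (\<lambda>Ws. ?P (elem (fst ab) (snd ab) # Ws)) Zs)
      = smap p q m (\<lambda>Ws. \<Sum>ab\<in>basis_idx p q. Y0 (fst ab) (snd ab) * ?P (elem (fst ab) (snd ab) # Ws)) Zs"
    by (rule smap_lin)
  also have "\<dots> = ?G' Zs"
  proof (rule smap_cong)
    fix idx assume idx: "idx \<in> LS p q m"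
    let ?E = "map (\<lambda>(x, y). elem x y) idx"
    have "?P ((Y0 # ?E)[0 := Y0]) = (\<Sum>ab\<in>basis_idx p q. Y0 (fst ab) (snd ab) * ?P ((Y0 # ?E)[0 := elem (fst ab) (snd ab)]))"
      by (rule Pk_slot) (use idx hY0 in \<open>auto simp: LS_def\<close>)
    then show "(\<Sum>ab\<in>basis_idx p q. Y0 (fst ab) (snd ab) * ?P (elem (fst ab) (snd ab) # ?E)) = ?P (Y0 # ?E)"
      by simp
  qed
  finally have 1: "(\<Sum>ab\<in>basis_idx p q. (if bodd p ab then -1 else 1) * boxt p 1 (dualf (fst ab) (snd ab)) (?G ab) Ys)
      = ?e * (-1) ^ par p Y0 * ?G' Zs" .
  have 2: "?e * (-1) ^ par p Y0 * ?G' Zs = ?G' Zs"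
  proof (cases "?G' Zs = 0")
    case True then show ?thesis by simp
  next
    case False
    have "?G' Zs = (-1) ^ m / (fact m * 2 ^ m) * altz p (2 * m) (\<lambda>Us. ?P (Y0 # brk p q m Us)) Zs"
      by (rule smap_formula[OF LinF_Pk[OF hY0] lZs hZs])
    then have "altz p (2 * m) (\<lambda>Us. ?P (Y0 # brk p q m Us)) Zs \<noteq> 0" using False by auto
    then obtain \<sigma> where s: "\<sigma> permutes {..<2 * m}" "?P (Y0 # brk p q m (permute (2 * m) \<sigma> Zs)) \<noteq> 0"
      by (rule altz_nonzero)
    have "even (par p Y0 + parsum p (permute (2 * m) \<sigma> Zs))"
      by (rule P_brk_deg[OF s(2) hY0]) (use homog_permute[OF s(1) lZs hZs] in auto)
    then have ev: "even (par p Y0 + parsum p Zs)" using parsum_permute[OF s(1) lZs, of p] by simp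
    have "?e * (-1) ^ par p Y0 = 1"
    proof (cases "par p Y0 = 0")
      case True then show ?thesis by simp
    next
      case False
      then have y1: "par p Y0 = 1" using par_cases[of p Y0] by simp
      then have "parsum p Zs mod 2 = 1" using ev by presburger
      then show ?thesis using y1 by simp
    qed
    then show ?thesis by simp
  qed
  show ?thesis using 1 2 Ys by simp
qed

fun invr :: "(nat \<Rightarrow> bool) \<Rightarrow> nat list \<Rightarrow> nat" where
  "invr D [] = 0"
| "invr D (x # L) = length (filter (\<lambda>y. y < x \<and> D x \<and> D y) L) + invr D L"

lemma invc_invr:
  "card {(u, v). u < v \<and> v < length L \<and> L ! v < L ! u \<and> D (L ! u) \<and> D (L ! v)} = invr D L"
proof (induction L)
  case Nil then show ?case by simp
next
  case (Cons x L)
  have "card {(u, v). u < v \<and> v < length (x # L) \<and> (\<lambda>a b. b < a \<and> D a \<and> D b) ((x # L) ! u) ((x # L) ! v)}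
      = card {v. v < length L \<and> (\<lambda>a b. b < a \<and> D a \<and> D b) x (L ! v)} +
        card {(u, v). u < v \<and> v < length L \<and> (\<lambda>a b. b < a \<and> D a \<and> D b) (L ! u) (L ! v)}"
    by (rule card_pairs_Cons)
  then show ?case using Cons by (simp add: length_filter_conv_card)
qed

definition cross :: "(nat \<Rightarrow> bool) \<Rightarrow> nat list \<Rightarrow> nat list \<Rightarrow> nat" where
  "cross D A B = sum_list (map (\<lambda>x. length (filter (\<lambda>y. y < x \<and> D x \<and> D y) B)) A)"

lemma invr_append: "invr D (A @ B) = invr D A + invr D B + cross D A B"
  by (induction A) (auto simp: cross_def)

lemma cross_append2: "cross D A (B @ C) = cross D A B + cross D A C"
  by (induction A) (auto simp: cross_def)

lemma cross_Nil2[simp]: "cross D A [] = 0"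
  by (induction A) (auto simp: cross_def)

lemma cross_lt:
  assumes "\<And>x y. x \<in> set A \<Longrightarrow> y \<in> set B \<Longrightarrow> y < x"
  shows "cross D A B = length (filter D A) * length (filter D B)"
  using assms
proof (induction A)
  case Nil then show ?case by (simp add: cross_def)
next
  case (Cons a A)
  have "filter (\<lambda>y. y < a \<and> D a \<and> D y) B = (if D a then filter D B else [])"
    using Cons.prems by (auto intro: filter_cong)
  then show ?case using Cons by (simp add: cross_def)
qed

lemma cross_gt:
  assumes "\<And>x y. x \<in> set A \<Longrightarrow> y \<in> set B \<Longrightarrow> x < y"
  shows "cross D A B = 0"
  using assms
proof (induction A)
  case Nil then show ?case by (simp add: cross_def)
next
  case (Cons a A)
  have "filter (\<lambda>y. y < a \<and> D a \<and> D y) B = []"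
    using Cons.prems by (auto simp: filter_empty_conv dest: less_asym)
  then show ?case using Cons by (simp add: cross_def)
qed

fun blk :: "nat \<Rightarrow> nat list" where
  "blk 0 = [0]"
| "blk (Suc i) = [2 * i + 1, 2 * i + 2]"

lemma blk_lt: "b < a \<Longrightarrow> x \<in> set (blk a) \<Longrightarrow> y \<in> set (blk b) \<Longrightarrow> y < x"
  by (cases a; cases b) auto

lemma invr_blk[simp]: "invr D (blk a) = 0"
  by (cases a) auto

definition DS :: "(nat \<Rightarrow> bool) \<Rightarrow> nat \<Rightarrow> bool" where
  "DS D a = odd (length (filter D (blk a)))"

lemma modadd: "(a::nat) mod 2 = b mod 2 \<Longrightarrow> c mod 2 = d mod 2 \<Longrightarrow> (a + c) mod 2 = (b + d) mod 2"
  by (metis mod_add_eq)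

lemma cross_blk_cons_mod:
  assumes "a \<notin> set L"
  shows "cross D (blk a) (concat (map blk L)) mod 2 = length (filter (\<lambda>b. b < a \<and> DS D a \<and> DS D b) L) mod 2"
  using assms
proof (induction L)
  case Nil then show ?case by simp
next
  case (Cons b L)
  have ab: "a \<noteq> b" using Cons.prems by simp
  have IH: "cross D (blk a) (concat (map blk L)) mod 2 = length (filter (\<lambda>b. b < a \<and> DS D a \<and> DS D b) L) mod 2"
    using Cons by simp
  have e1: "cross D (blk a) (blk b) mod 2 = (if b < a \<and> DS D a \<and> DS D b then 1 else 0)"
  proof (cases "b < a")
    case True
    have "cross D (blk a) (blk b) = length (filter D (blk a)) * length (filter D (blk b))"
      by (rule cross_lt) (rule blk_lt[OF True])
    then show ?thesis using True by (auto simp: DS_def mod2_eq_if even_mult_iff)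
  next
    case False
    then have "a < b" using ab by simp
    have "cross D (blk a) (blk b) = 0" by (rule cross_gt) (rule blk_lt[OF \<open>a < b\<close>])
    then show ?thesis using False by simp
  qed
  have eX: "cross D (blk a) (concat (map blk (b # L))) = cross D (blk a) (blk b) + cross D (blk a) (concat (map blk L))"
    by (simp add: cross_append2)
  have eY: "length (filter (\<lambda>b. b < a \<and> DS D a \<and> DS D b) (b # L))
      = (if b < a \<and> DS D a \<and> DS D b then 1 else 0) + length (filter (\<lambda>b. b < a \<and> DS D a \<and> DS D b) L)"
    by simp
  have e1': "cross D (blk a) (blk b) mod 2 = (if b < a \<and> DS D a \<and> DS D b then 1 else 0) mod 2"
    using e1 by simp
  show ?case unfolding eX eY by (rule modadd[OF e1' IH])
qed

lemma invr_concat_mod: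
  assumes "distinct L"
  shows "invr D (concat (map blk L)) mod 2 = invr (DS D) L mod 2"
  using assms
proof (induction L)
  case Nil then show ?case by simp
next
  case (Cons a L)
  have e0: "invr D (concat (map blk (a # L))) = invr D (concat (map blk L)) + cross D (blk a) (concat (map blk L))"
    by (simp add: invr_append)
  have e1: "cross D (blk a) (concat (map blk L)) mod 2 = length (filter (\<lambda>b. b < a \<and> DS D a \<and> DS D b) L) mod 2"
    using Cons.prems by (intro cross_blk_cons_mod) auto
  have e2: "invr D (concat (map blk L)) mod 2 = invr (DS D) L mod 2" using Cons by simp
  have e3: "invr (DS D) (a # L) = invr (DS D) L + length (filter (\<lambda>b. b < a \<and> DS D a \<and> DS D b) L)"
    by simp
  show ?case unfolding e0 e3 by (rule modadd[OF e2 e1])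
qed


lemma kzf_list: "kzf D \<sigma> N = (-1) ^ invr D (map \<sigma> [0..<N])"
proof -
  have eq: "{(i, j). i < j \<and> j < N \<and> \<sigma> j < \<sigma> i \<and> D (\<sigma> i) \<and> D (\<sigma> j)}
    = {(u, v). u < v \<and> v < length (map \<sigma> [0..<N]) \<and> map \<sigma> [0..<N] ! v < map \<sigma> [0..<N] ! u
        \<and> D (map \<sigma> [0..<N] ! u) \<and> D (map \<sigma> [0..<N] ! v)}"
    by auto
  have c: "card {(u, v). u < v \<and> v < length (map \<sigma> [0..<N]) \<and> map \<sigma> [0..<N] ! v < map \<sigma> [0..<N] ! u
        \<and> D (map \<sigma> [0..<N] ! u) \<and> D (map \<sigma> [0..<N] ! v)} = invr D (map \<sigma> [0..<N])"
    by (rule invc_invr)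
  show ?thesis by (simp only: kzf_def eq c)
qed

lemma m1pow_mod: "(a::nat) mod 2 = b mod 2 \<Longrightarrow> (-1::complex) ^ a = (-1) ^ b"
  by (metis neg_one_even_power neg_one_odd_power even_iff_mod_2_eq_zero)

lemma invr_zero: "invr (\<lambda>I. I = 0) L = 0"
  by (induction L) auto

definition Lt :: "nat \<Rightarrow> (nat \<Rightarrow> nat) \<Rightarrow> nat list" where
  "Lt k \<pi> = concat (map (\<lambda>I. blk (\<pi> I)) [0..<k])"

lemma length_blk: "length (blk I) = (if I = 0 then 1 else 2)"
  by (cases I) auto

lemma sum_length_blk: "(\<Sum>I<Suc m. length (blk I)) = Suc (2 * m)"
  by (induction m) (auto simp: length_blk)

lemma length_Lt:
  assumes "\<pi> permutes {..<Suc m}"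
  shows "length (Lt (Suc m) \<pi>) = Suc (2 * m)"
proof -
  have "length (Lt (Suc m) \<pi>) = (\<Sum>I<Suc m. length (blk (\<pi> I)))"
    by (simp add: Lt_def length_concat sum_list_sum_nth atLeast0LessThan)
  also have "\<dots> = (\<Sum>I<Suc m. length (blk I))"
    using sum.permute[OF assms, of "\<lambda>I. length (blk I)"] by (simp add: o_def)
  finally show ?thesis by (simp only: sum_length_blk)
qed

lemma set_blk_union: "(\<Union>I<Suc m. set (blk I)) = {..<Suc (2 * m)}"
proof (rule set_eqI, rule iffI)
  fix x assume "x \<in> (\<Union>I<Suc m. set (blk I))"
  then obtain I where "I < Suc m" "x \<in> set (blk I)" by auto
  then show "x \<in> {..<Suc (2 * m)}" by (cases I) auto
next
  fix x assume x: "x \<in> {..<Suc (2 * m)}"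
  show "x \<in> (\<Union>I<Suc m. set (blk I))"
  proof (cases "x = 0")
    case True then show ?thesis by (auto intro: bexI[of _ 0])
  next
    case False
    show ?thesis
    proof (cases "odd x")
      case True
      then obtain i where i: "x = 2 * i + 1" by (metis oddE)
      then have "i < m" using x by simp
      then show ?thesis using i by (auto intro!: bexI[of _ "Suc i"])
    next
      case ev: False
      then obtain i where i: "x = 2 * i + 2" using False by (metis evenE mult_eq_0_iff not0_implies_Suc mult_Suc_right add.commute add_2_eq_Suc')
      then have "i < m" using x by simp
      then show ?thesis using i by (auto intro!: bexI[of _ "Suc i"])
    qed
  qed
qed

lemma set_Lt:
  assumes "\<pi> permutes {..<Suc m}"
  shows "set (Lt (Suc m) \<pi>) = {..<Suc (2 * m)}"
proof -
  have "set (Lt (Suc m) \<pi>) = (\<Union>I<Suc m. set (blk (\<pi> I)))"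
    by (simp add: Lt_def atLeast0LessThan del: upt_Suc)
  also have "\<dots> = (\<Union>J\<in>\<pi> ` {..<Suc m}. set (blk J))" by auto
  also have "\<pi> ` {..<Suc m} = {..<Suc m}" by (rule permutes_image[OF assms])
  finally show ?thesis using set_blk_union by simp
qed

lemma distinct_Lt:
  assumes "\<pi> permutes {..<Suc m}"
  shows "distinct (Lt (Suc m) \<pi>)"
  by (rule card_distinct) (simp add: set_Lt[OF assms] length_Lt[OF assms])

definition tau :: "nat \<Rightarrow> (nat \<Rightarrow> nat) \<Rightarrow> nat \<Rightarrow> nat" where
  "tau m \<pi> = (\<lambda>e. if e < Suc (2 * m) then Lt (Suc m) \<pi> ! e else e)"

lemma tau_permutes:
  assumes "\<pi> permutes {..<Suc m}"
  shows "tau m \<pi> permutes {..<Suc (2 * m)}"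
proof -
  have "bij_betw ((!) (Lt (Suc m) \<pi>)) {..<length (Lt (Suc m) \<pi>)} (set (Lt (Suc m) \<pi>))"
    by (rule bij_betw_nth[OF distinct_Lt[OF assms]]) auto
  then have "bij_betw ((!) (Lt (Suc m) \<pi>)) {..<Suc (2 * m)} {..<Suc (2 * m)}"
    by (simp add: length_Lt[OF assms] set_Lt[OF assms])
  then have "bij_betw (tau m \<pi>) {..<Suc (2 * m)} {..<Suc (2 * m)}"
    by (rule bij_betw_cong[THEN iffD1, rotated]) (simp add: tau_def)
  then show ?thesis by (rule bij_imp_permutes) (simp add: tau_def)
qed

lemma map_tau:
  assumes "\<pi> permutes {..<Suc m}"
  shows "map (tau m \<pi>) [0..<Suc (2 * m)] = Lt (Suc m) \<pi>"
  by (rule nth_equalityI) (auto simp: length_Lt[OF assms] tau_def simp del: upt_Suc)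

lemma permute_tau:
  assumes "\<pi> permutes {..<Suc m}"
  shows "permute (Suc (2 * m)) (tau m \<pi>) Ys = map ((!) Ys) (Lt (Suc m) \<pi>)"
proof -
  have "permute (Suc (2 * m)) (tau m \<pi>) Ys = map ((!) Ys) (map (tau m \<pi>) [0..<Suc (2 * m)])"
    by (simp add: permute_def del: upt_Suc)
  then show ?thesis unfolding map_tau[OF assms] .
qed

lemma sign_tau:
  assumes "\<pi> permutes {..<Suc m}"
  shows "of_int (sign (tau m \<pi>)) = (1::complex)"
proof -
  have "of_int (sign (tau m \<pi>)) = kzf (\<lambda>_. True) (tau m \<pi>) (Suc (2 * m))"
    by (rule sign_kzf[OF tau_permutes[OF assms]])
  also have "\<dots> = (-1) ^ invr (\<lambda>_. True) (Lt (Suc m) \<pi>)"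
    unfolding kzf_list map_tau[OF assms] ..
  also have "\<dots> = (-1) ^ invr (DS (\<lambda>_. True)) (map \<pi> [0..<Suc m])"
  proof (rule m1pow_mod)
    have "distinct (map \<pi> [0..<Suc m])"
      using permutes_inj[OF assms] by (simp add: distinct_map inj_on_subset[of _ UNIV] del: upt_Suc)
    from invr_concat_mod[OF this, of "\<lambda>_. True"]
    show "invr (\<lambda>_. True) (Lt (Suc m) \<pi>) mod 2 = invr (DS (\<lambda>_. True)) (map \<pi> [0..<Suc m]) mod 2"
      by (simp add: Lt_def o_def del: upt_Suc)
  qed
  also have "DS (\<lambda>_. True) = (\<lambda>I. I = 0)"
    by (auto simp: DS_def length_blk fun_eq_iff)
  finally show ?thesis by (simp add: invr_zero)
qed


definition prd :: "nat \<Rightarrow> nat \<Rightarrow> smat list \<Rightarrow> nat \<Rightarrow> smat" where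
  "prd p q Ys i = mmult (p+q) (Ys ! (2 * i + 1)) (Ys ! (2 * i + 2))"

definition Bl :: "nat \<Rightarrow> nat \<Rightarrow> nat \<Rightarrow> smat list \<Rightarrow> smat list" where
  "Bl p q m Ys = Ys ! 0 # map (prd p q Ys) [0..<m]"

definition dsb :: "nat \<Rightarrow> smat list \<Rightarrow> nat \<Rightarrow> bool" where
  "dsb p Ys a = (if a = 0 then par p (Ys ! 0) = 1 else odd (par p (Ys ! (2 * a - 1)) + par p (Ys ! (2 * a))))"

lemma koszul_tau:
  assumes "\<pi> permutes {..<Suc m}"
  shows "koszul p (Suc (2 * m)) (tau m \<pi>) Ys = kzf (dsb p Ys) \<pi> (Suc m)"
proof -
  let ?D = "\<lambda>a. par p (Ys ! a) = 1"
  have "koszul p (Suc (2 * m)) (tau m \<pi>) Ys = (-1) ^ invr ?D (Lt (Suc m) \<pi>)"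
    unfolding koszul_kzf kzf_list map_tau[OF assms] ..
  also have "\<dots> = (-1) ^ invr (DS ?D) (map \<pi> [0..<Suc m])"
  proof (rule m1pow_mod)
    have "distinct (map \<pi> [0..<Suc m])"
      using permutes_inj[OF assms] by (simp add: distinct_map inj_on_subset[of _ UNIV] del: upt_Suc)
    from invr_concat_mod[OF this, of ?D]
    show "invr ?D (Lt (Suc m) \<pi>) mod 2 = invr (DS ?D) (map \<pi> [0..<Suc m]) mod 2"
      by (simp add: Lt_def o_def del: upt_Suc)
  qed
  also have "\<dots> = kzf (DS ?D) \<pi> (Suc m)" by (simp only: kzf_list)
  also have "\<dots> = kzf (dsb p Ys) \<pi> (Suc m)"
  proof (rule kzf_cong[OF assms])
    fix a assume "a < Suc m"
    show "DS ?D a = dsb p Ys a"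
    proof (cases a)
      case 0 then show ?thesis by (simp add: DS_def dsb_def)
    next
      case (Suc i)
      have "2 * Suc i - 1 = 2 * i + 1" by simp
      then show ?thesis using Suc par_cases[of p "Ys ! (2 * i + 1)"] par_cases[of p "Ys ! (2 * i + 2)"]
        by (auto simp: DS_def dsb_def)
    qed
  qed
  finally show ?thesis .
qed

lemma om_tau:
  assumes "\<pi> permutes {..<Suc m}"
  shows "om p (Suc (2 * m)) (tau m \<pi>) Ys = kzf (dsb p Ys) \<pi> (Suc m)"
  by (simp add: om_def sign_tau[OF assms] koszul_tau[OF assms])

lemma mprod_blk:
  assumes "J < Suc m" "length Ys = Suc (2 * m)" "\<And>Y. Y \<in> set Ys \<Longrightarrow> Y \<in> gl p q"
  shows "mprod (p+q) (map ((!) Ys) (blk J)) = Bl p q m Ys ! J"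
proof (cases J)
  case 0
  have "Ys ! 0 \<in> gl p q" using assms by simp
  then show ?thesis using 0 by (simp add: Bl_def mprod_def mmult_mone_right)
next
  case (Suc i)
  then have i: "i < m" using assms(1) by simp
  have "Ys ! (2 * i + 2) \<in> gl p q" using assms i by simp
  then show ?thesis using Suc i by (simp add: Bl_def mprod_def mmult_mone_right prd_def)
qed

lemma mprod_tau:
  assumes pi: "\<pi> permutes {..<Suc m}" and l: "length Ys = Suc (2 * m)" and g: "\<And>Y. Y \<in> set Ys \<Longrightarrow> Y \<in> gl p q"
  shows "mprod (p+q) (permute (Suc m) \<pi> (Bl p q m Ys)) = mprod (p+q) (permute (Suc (2 * m)) (tau m \<pi>) Ys)"
proof -
  have "permute (Suc (2 * m)) (tau m \<pi>) Ys = concat (map (\<lambda>I. map ((!) Ys) (blk (\<pi> I))) [0..<Suc m])"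
    unfolding permute_tau[OF pi] Lt_def by (simp add: map_concat o_def del: upt_Suc)
  moreover have "\<And>X. X \<in> set (concat (map (\<lambda>I. map ((!) Ys) (blk (\<pi> I))) [0..<Suc m])) \<Longrightarrow> X \<in> gl p q"
  proof -
    fix X assume "X \<in> set (concat (map (\<lambda>I. map ((!) Ys) (blk (\<pi> I))) [0..<Suc m]))"
    then have "X \<in> set (map ((!) Ys) (Lt (Suc m) \<pi>))" by (simp add: Lt_def del: upt_Suc) blast
    then obtain e where "e \<in> set (Lt (Suc m) \<pi>)" "X = Ys ! e" by auto
    then have "e < length Ys" "X = Ys ! e" using set_Lt[OF pi] l by auto
    then show "X \<in> gl p q" using g by auto
  qed
  ultimately have "mprod (p+q) (permute (Suc (2 * m)) (tau m \<pi>) Ys)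
      = mprod (p+q) (map (mprod (p+q)) (map (\<lambda>I. map ((!) Ys) (blk (\<pi> I))) [0..<Suc m]))"
    using mprod_concat by metis
  also have "\<dots> = mprod (p+q) (map (\<lambda>I. Bl p q m Ys ! (\<pi> I)) [0..<Suc m])"
  proof -
    have "map (mprod (p+q)) (map (\<lambda>I. map ((!) Ys) (blk (\<pi> I))) [0..<Suc m]) = map (\<lambda>I. Bl p q m Ys ! (\<pi> I)) [0..<Suc m]"
    proof (subst map_map, rule map_cong[OF refl])
      fix I assume "I \<in> set [0..<Suc m]"
      then have "\<pi> I < Suc m" using perm_img[OF pi] by (simp del: upt_Suc)
      then show "(mprod (p+q) \<circ> (\<lambda>I. map ((!) Ys) (blk (\<pi> I)))) I = Bl p q m Ys ! (\<pi> I)"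
        using mprod_blk[OF _ l g] by simp
    qed
    then show ?thesis by (rule arg_cong)
  qed
  also have "\<dots> = mprod (p+q) (permute (Suc m) \<pi> (Bl p q m Ys))"
    by (simp add: permute_def del: upt_Suc)
  finally show ?thesis ..
qed

lemma length_Bl[simp]: "length (Bl p q m Ys) = Suc m"
  by (simp add: Bl_def)

lemma step_c:
  assumes l: "length Xs = Suc (2 * m)" and h: "\<And>X. X \<in> set Xs \<Longrightarrow> homog p q X"
  shows "altz p (Suc (2 * m)) (\<lambda>Ys. Pd p q (dsb p Ys) (Bl p q m Ys)) Xs = fact (Suc m) * Lamk p q (Suc (2 * m)) Xs"
proof -
  let ?n = "Suc (2 * m)"
  let ?S = "{\<pi>. \<pi> permutes {..<Suc m}}"
  have "altz p ?n (\<lambda>Ys. Pd p q (dsb p Ys) (Bl p q m Ys)) Xs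
     = altz p ?n (\<lambda>Ys. \<Sum>\<pi>\<in>?S. 1 * (kzf (dsb p Ys) \<pi> (Suc m) * str p q (mprod (p+q) (permute (Suc m) \<pi> (Bl p q m Ys))))) Xs"
    by (rule altz_cong) (simp only: Pd_alt length_Bl mult_1)
  also have "\<dots> = (\<Sum>\<pi>\<in>?S. 1 * altz p ?n (\<lambda>Ys. kzf (dsb p Ys) \<pi> (Suc m) * str p q (mprod (p+q) (permute (Suc m) \<pi> (Bl p q m Ys)))) Xs)"
    by (rule altz_sum[symmetric])
  also have "\<dots> = (\<Sum>\<pi>\<in>?S. Lamk p q ?n Xs)"
  proof (rule sum.cong[OF refl])
    fix \<pi> assume "\<pi> \<in> ?S"
    then have pi: "\<pi> permutes {..<Suc m}" by simp
    have "altz p ?n (\<lambda>Ys. kzf (dsb p Ys) \<pi> (Suc m) * str p q (mprod (p+q) (permute (Suc m) \<pi> (Bl p q m Ys)))) Xs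
       = altz p ?n (\<lambda>Ys. om p ?n (tau m \<pi>) Ys * (\<lambda>Zs. str p q (mprod (p+q) Zs)) (permute ?n (tau m \<pi>) Ys)) Xs"
    proof (rule altz_cong)
      fix \<sigma> assume s: "\<sigma> permutes {..<?n}"
      let ?Ys = "permute ?n \<sigma> Xs"
      have g: "\<And>Y. Y \<in> set ?Ys \<Longrightarrow> Y \<in> gl p q" using homog_permute[OF s l h] homog_gl by blast
      show "kzf (dsb p ?Ys) \<pi> (Suc m) * str p q (mprod (p+q) (permute (Suc m) \<pi> (Bl p q m ?Ys)))
         = om p ?n (tau m \<pi>) ?Ys * (\<lambda>Zs. str p q (mprod (p+q) Zs)) (permute ?n (tau m \<pi>) ?Ys)"
        using om_tau[OF pi] mprod_tau[OF pi _ g] by simp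
    qed
    also have "\<dots> = altz p ?n (\<lambda>Zs. str p q (mprod (p+q) Zs)) Xs"
      by (rule altz_inv[OF tau_permutes[OF pi]])
    finally show "1 * altz p ?n (\<lambda>Ys. kzf (dsb p Ys) \<pi> (Suc m) * str p q (mprod (p+q) (permute (Suc m) \<pi> (Bl p q m Ys)))) Xs
        = Lamk p q ?n Xs" by (simp add: Lamk_altz)
  qed
  also have "\<dots> = fact (Suc m) * Lamk p q ?n Xs"
    by (simp add: card_permutations algebra_simps)
  finally show ?thesis .
qed

definition brt :: "nat \<Rightarrow> nat \<Rightarrow> smat list \<Rightarrow> nat \<Rightarrow> smat" where
  "brt p q Ys i = sbracket p q (Ys ! (2 * i + 1)) (Ys ! (2 * i + 2))"

definition Lq :: "nat \<Rightarrow> nat \<Rightarrow> nat \<Rightarrow> nat \<Rightarrow> smat list \<Rightarrow> smat list" where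
  "Lq p q m j Ys = Ys ! 0 # map (\<lambda>i. if i < j then prd p q Ys i else brt p q Ys i) [0..<m]"

lemma length_Lq[simp]: "length (Lq p q m j Ys) = Suc m" by (simp add: Lq_def)

lemma step_a:
  assumes l: "length Ys = Suc (2 * m)" and h: "\<And>Y. Y \<in> set Ys \<Longrightarrow> homog p q Y"
  shows "Pk p q (Suc m) (hd Ys # brk p q m (tl Ys)) = Pd p q (dsb p Ys) (Lq p q m 0 Ys)"
proof -
  have e: "hd Ys # brk p q m (tl Ys) = Lq p q m 0 Ys"
    using l by (cases Ys) (auto simp: Lq_def brk_def brt_def)
  have "Pk p q (Suc m) (Lq p q m 0 Ys) = Pd p q (\<lambda>a. par p (Lq p q m 0 Ys ! a) = 1) (Lq p q m 0 Ys)"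
    by (rule Pk_Pd) simp
  also have "\<dots> = Pd p q (dsb p Ys) (Lq p q m 0 Ys)"
  proof (rule Pd_cong)
    fix i assume i: "i < length (Lq p q m 0 Ys)" and nzi: "nz (Lq p q m 0 Ys ! i)"
    show "(par p (Lq p q m 0 Ys ! i) = 1) = dsb p Ys i"
    proof (cases i)
      case 0 then show ?thesis by (simp add: Lq_def dsb_def)
    next
      case (Suc j)
      then have j: "j < m" using i by simp
      have "Ys ! (2 * j + 1) \<in> set Ys" "Ys ! (2 * j + 2) \<in> set Ys" using j l by auto
      then have "hp p (brt p q Ys j) (par p (Ys ! (2 * j + 1)) + par p (Ys ! (2 * j + 2)))"
        unfolding brt_def using h by (auto intro!: hp_sbracket homog_hp[where q=q])
      moreover have "Lq p q m 0 Ys ! i = brt p q Ys j" using Suc j by (simp add: Lq_def)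
      ultimately have "par p (Lq p q m 0 Ys ! i) = (par p (Ys ! (2 * j + 1)) + par p (Ys ! (2 * j + 2))) mod 2"
        using hp_par nzi by metis
      moreover have "2 * Suc j - 1 = 2 * j + 1" by simp
      ultimately show ?thesis using Suc by (simp add: dsb_def) presburger
    qed
  qed
  finally show ?thesis using e by simp
qed


lemma Pd_slot2:
  assumes "r < length W"
  shows "Pd p q D (W[r := (\<lambda>i l. c1 * M1 i l + c2 * M2 i l)]) = c1 * Pd p q D (W[r := M1]) + c2 * Pd p q D (W[r := M2])"
proof -
  have e: "(\<lambda>i l. c1 * M1 i l + c2 * M2 i l) = (\<lambda>i l. \<Sum>a\<in>{0::nat, 1}. (if a = 0 then c1 else c2) * (if a = 0 then M1 else M2) i l)"
    by (simp add: fun_eq_iff)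
  show ?thesis unfolding e Pd_slot[OF assms] by simp
qed

lemma altz_lin2: "altz p N (\<lambda>Ys. a * F Ys + b * G Ys) X = a * altz p N F X + b * altz p N G X"
  unfolding altz_om by (simp add: sum.distrib sum_distrib_left algebra_simps)

lemma nth_transp:
  assumes "x < N" "Suc (2 * j + 1) < N"
  shows "permute N (Transposition.transpose (2 * j + 1) (Suc (2 * j + 1))) Ys ! x
     = (if x = 2 * j + 1 then Ys ! (2 * j + 2) else if x = 2 * j + 2 then Ys ! (2 * j + 1) else Ys ! x)"
  using assms by (simp add: Transposition.transpose_def)

lemma step_b:
  assumes j: "j < m" and l: "length Xs = Suc (2 * m)"
  shows "altz p (Suc (2 * m)) (\<lambda>Ys. 2 ^ j * Pd p q (dsb p Ys) (Lq p q m j Ys)) Xs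
       = altz p (Suc (2 * m)) (\<lambda>Ys. 2 ^ Suc j * Pd p q (dsb p Ys) (Lq p q m (Suc j) Ys)) Xs"
proof -
  let ?n = "Suc (2 * m)"
  let ?r = "Suc j"
  let ?a = "\<lambda>Ys::smat list. Ys ! (2 * j + 1)"
  let ?b = "\<lambda>Ys::smat list. Ys ! (2 * j + 2)"
  let ?s = "\<lambda>Ys::smat list. (-1::complex) ^ (par p (?a Ys) * par p (?b Ys))"
  let ?H1 = "\<lambda>Ys. Pd p q (dsb p Ys) ((Lq p q m j Ys)[?r := mmult (p+q) (?a Ys) (?b Ys)])"
  let ?H2 = "\<lambda>Ys. Pd p q (dsb p Ys) ((Lq p q m j Ys)[?r := mmult (p+q) (?b Ys) (?a Ys)])"
  let ?\<rho> = "Transposition.transpose (2 * j + 1) (Suc (2 * j + 1))"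
  have rho: "?\<rho> permutes {..<?n}" using j by (intro permutes_swap_id) auto
  have e1: "Pd p q (dsb p Ys) (Lq p q m j Ys) = 1 * ?H1 Ys + (- ?s Ys) * ?H2 Ys" for Ys
  proof -
    have "Lq p q m j Ys ! ?r = brt p q Ys j" using j by (simp add: Lq_def)
    then have "Lq p q m j Ys = (Lq p q m j Ys)[?r := brt p q Ys j]" by (metis list_update_id)
    also have "brt p q Ys j = (\<lambda>i l. 1 * mmult (p+q) (?a Ys) (?b Ys) i l + (- ?s Ys) * mmult (p+q) (?b Ys) (?a Ys) i l)"
      by (simp add: brt_def sbracket_def fun_eq_iff)
    finally have "Pd p q (dsb p Ys) (Lq p q m j Ys) = Pd p q (dsb p Ys) ((Lq p q m j Ys)[?r := (\<lambda>i l. 1 * mmult (p+q) (?a Ys) (?b Ys) i l + (- ?s Ys) * mmult (p+q) (?b Ys) (?a Ys) i l)])"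
      by simp
    also have "\<dots> = 1 * ?H1 Ys + (- ?s Ys) * ?H2 Ys"
      by (rule Pd_slot2) (use j in simp)
    finally show ?thesis .
  qed
  have e2: "Lq p q m (Suc j) Ys = (Lq p q m j Ys)[?r := mmult (p+q) (?a Ys) (?b Ys)]" for Ys
    by (rule nth_equalityI) (use j in \<open>auto simp: Lq_def nth_list_update prd_def nth_Cons split: nat.splits\<close>)
  have e3: "om p ?n ?\<rho> Ys * ((- ?s (permute ?n ?\<rho> Ys)) * ?H2 (permute ?n ?\<rho> Ys)) = ?H1 Ys" for Ys
  proof -
    let ?Y = "permute ?n ?\<rho> Ys"
    have jn: "Suc (2 * j + 1) < ?n" using j by simp
    have x1: "2 * j + 1 < ?n" and x2: "2 * j + 2 < ?n" using j by simp_all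
    have ya: "?a ?Y = ?b Ys" using nth_transp[OF x1 jn, of Ys] by simp
    have yb: "?b ?Y = ?a Ys" using nth_transp[OF x2 jn, of Ys] by simp
    have y0: "?Y ! 0 = Ys ! 0" using nth_transp[OF _ jn, of 0 Ys] by simp
    have yo: "?Y ! x = Ys ! x" if "x < ?n" "x \<noteq> 2 * j + 1" "x \<noteq> 2 * j + 2" for x
      using nth_transp[OF that(1) jn, of Ys] that by simp
    have sY: "?s ?Y = ?s Ys" unfolding ya yb by (simp add: mult.commute)
    have L: "(Lq p q m j ?Y)[?r := mmult (p+q) (?b ?Y) (?a ?Y)] = (Lq p q m j Ys)[?r := mmult (p+q) (?a Ys) (?b Ys)]"
    proof (rule nth_equalityI)
      show "length ((Lq p q m j ?Y)[?r := mmult (p+q) (?b ?Y) (?a ?Y)]) = length ((Lq p q m j Ys)[?r := mmult (p+q) (?a Ys) (?b Ys)])"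
        by simp
      fix i assume "i < length ((Lq p q m j ?Y)[?r := mmult (p+q) (?b ?Y) (?a ?Y)])"
      then have i: "i < Suc m" by simp
      show "(Lq p q m j ?Y)[?r := mmult (p+q) (?b ?Y) (?a ?Y)] ! i = (Lq p q m j Ys)[?r := mmult (p+q) (?a Ys) (?b Ys)] ! i"
      proof (cases i)
        case 0 then show ?thesis using y0 by (simp add: Lq_def)
      next
        case (Suc i')
        show ?thesis
        proof (cases "i' = j")
          case True then show ?thesis using Suc ya yb j by simp
        next
          case False
          then have "i' < m" using i Suc by simp
          moreover have "?Y ! (2 * i' + 1) = Ys ! (2 * i' + 1)" "?Y ! (2 * i' + 2) = Ys ! (2 * i' + 2)"
            using yo[of "2 * i' + 1"] yo[of "2 * i' + 2"] False \<open>i' < m\<close> by auto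
          ultimately show ?thesis using Suc False by (simp add: Lq_def prd_def brt_def)
        qed
      qed
    qed
    have D: "Pd p q (dsb p ?Y) ((Lq p q m j Ys)[?r := mmult (p+q) (?a Ys) (?b Ys)])
        = Pd p q (dsb p Ys) ((Lq p q m j Ys)[?r := mmult (p+q) (?a Ys) (?b Ys)])"
    proof (rule Pd_cong)
      fix i assume "i < length ((Lq p q m j Ys)[?r := mmult (p+q) (?a Ys) (?b Ys)])"
      then have i: "i < Suc m" by simp
      show "dsb p ?Y i = dsb p Ys i"
      proof (cases i)
        case 0 then show ?thesis using y0 by (simp add: dsb_def)
      next
        case (Suc i')
        have t: "2 * Suc i' - 1 = 2 * i' + 1" by simp
        show ?thesis
        proof (cases "i' = j")
          case True then show ?thesis using Suc ya yb t by (simp add: dsb_def add.commute)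
        next
          case False
          then have "i' < m" using i Suc by simp
          moreover have "?Y ! (2 * i' + 1) = Ys ! (2 * i' + 1)" "?Y ! (2 * i' + 2) = Ys ! (2 * i' + 2)"
            using yo[of "2 * i' + 1"] yo[of "2 * i' + 2"] False \<open>i' < m\<close> by auto
          ultimately show ?thesis using Suc t by (simp add: dsb_def)
        qed
      qed
    qed
    have H2: "?H2 ?Y = ?H1 Ys" using L D by simp
    have omv: "om p ?n ?\<rho> Ys = - (if par p (?a Ys) = 1 \<and> par p (?b Ys) = 1 then -1 else 1)"
    proof -
      have "of_int (sign ?\<rho>) = (-1::complex)" by (simp add: sign_swap_id)
      moreover have "koszul p ?n ?\<rho> Ys = (if par p (?a Ys) = 1 \<and> par p (?b Ys) = 1 then -1 else 1)"
        unfolding koszul_kzf using kzf_adj[OF jn, of "\<lambda>a. par p (Ys ! a) = 1"] by simp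
      ultimately show ?thesis by (simp add: om_def)
    qed
    have "om p ?n ?\<rho> Ys * (- ?s ?Y) = 1"
      unfolding sY omv
    proof -
      have pa: "par p (?a Ys) = 0 \<or> par p (?a Ys) = 1" by (rule par_cases)
      have pb: "par p (?b Ys) = 0 \<or> par p (?b Ys) = 1" by (rule par_cases)
      show "- (if par p (?a Ys) = 1 \<and> par p (?b Ys) = 1 then -1 else 1) * - ?s Ys = 1"
        using pa pb by (elim disjE) simp_all
    qed
    then have "om p ?n ?\<rho> Ys * ((- ?s ?Y) * ?H2 ?Y) = 1 * ?H2 ?Y" by (simp only: mult.assoc[symmetric])
    then show ?thesis using H2 by simp
  qed
  have A2: "altz p ?n (\<lambda>Ys. (- ?s Ys) * ?H2 Ys) Xs = altz p ?n ?H1 Xs"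
  proof -
    have "altz p ?n (\<lambda>Ys. (- ?s Ys) * ?H2 Ys) Xs = altz p ?n (\<lambda>Ys. om p ?n ?\<rho> Ys * ((- ?s (permute ?n ?\<rho> Ys)) * ?H2 (permute ?n ?\<rho> Ys))) Xs"
      by (rule altz_inv[OF rho, symmetric])
    also have "\<dots> = altz p ?n ?H1 Xs" by (simp only: e3)
    finally show ?thesis .
  qed
  have "altz p ?n (\<lambda>Ys. 2 ^ j * Pd p q (dsb p Ys) (Lq p q m j Ys)) Xs
      = altz p ?n (\<lambda>Ys. 2 ^ j * ?H1 Ys + 2 ^ j * ((- ?s Ys) * ?H2 Ys)) Xs"
    by (simp only: e1 distrib_left mult_1)
  also have "\<dots> = 2 ^ j * altz p ?n ?H1 Xs + 2 ^ j * altz p ?n (\<lambda>Ys. (- ?s Ys) * ?H2 Ys) Xs"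
    by (rule altz_lin2)
  also have "\<dots> = 2 ^ Suc j * altz p ?n ?H1 Xs" unfolding A2 by simp
  also have "\<dots> = altz p ?n (\<lambda>Ys. 2 ^ Suc j * ?H1 Ys + 0 * ?H1 Ys) Xs"
    unfolding altz_lin2 by simp
  also have "\<dots> = altz p ?n (\<lambda>Ys. 2 ^ Suc j * Pd p q (dsb p Ys) (Lq p q m (Suc j) Ys)) Xs"
    by (simp only: e2 mult_zero_left add_0_right)
  finally show ?thesis .
qed

lemma step4:
  assumes l: "length Xs = Suc (2 * m)" and h: "\<And>X. X \<in> set Xs \<Longrightarrow> homog p q X"
  shows "altz p (Suc (2 * m)) (\<lambda>Ys. Pk p q (Suc m) (hd Ys # brk p q m (tl Ys))) Xs
       = 2 ^ m * fact (Suc m) * Lamk p q (Suc (2 * m)) Xs"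
proof -
  let ?n = "Suc (2 * m)"
  let ?Q = "\<lambda>j. altz p ?n (\<lambda>Ys. 2 ^ j * Pd p q (dsb p Ys) (Lq p q m j Ys)) Xs"
  have "altz p ?n (\<lambda>Ys. Pk p q (Suc m) (hd Ys # brk p q m (tl Ys))) Xs = ?Q 0"
  proof (rule altz_cong)
    fix \<sigma> assume s: "\<sigma> permutes {..<?n}"
    show "Pk p q (Suc m) (hd (permute ?n \<sigma> Xs) # brk p q m (tl (permute ?n \<sigma> Xs)))
        = 2 ^ 0 * Pd p q (dsb p (permute ?n \<sigma> Xs)) (Lq p q m 0 (permute ?n \<sigma> Xs))"
      using step_a[OF _ homog_permute[OF s l h]] by simp
  qed
  also have "\<forall>j. j \<le> m \<longrightarrow> ?Q 0 = ?Q j"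
  proof (intro allI)
    fix j show "j \<le> m \<longrightarrow> ?Q 0 = ?Q j"
    proof (induction j)
      case 0 then show ?case by simp
    next
      case (Suc j)
      then show ?case using step_b[of j m Xs p q] l by simp
    qed
  qed
  then have "?Q 0 = ?Q m" by simp
  also have "?Q m = altz p ?n (\<lambda>Ys. 2 ^ m * Pd p q (dsb p Ys) (Bl p q m Ys) + 0 * Pd p q (dsb p Ys) (Bl p q m Ys)) Xs"
  proof -
    have "\<And>Ys. Lq p q m m Ys = Bl p q m Ys" by (simp add: Lq_def Bl_def)
    then show ?thesis by simp
  qed
  also have "\<dots> = 2 ^ m * altz p ?n (\<lambda>Ys. Pd p q (dsb p Ys) (Bl p q m Ys)) Xs + 0"
    unfolding altz_lin2 by simp
  also have "\<dots> = 2 ^ m * (fact (Suc m) * Lamk p q ?n Xs)"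
    by (simp only: step_c[OF l h] add_0_right)
  finally show ?thesis by simp
qed

lemma sum_split_sign:
  assumes "finite A"
  shows "(\<Sum>x\<in>{x\<in>A. \<not> P x}. f x) - (\<Sum>x\<in>{x\<in>A. P x}. f x) = (\<Sum>x\<in>A. (if P x then -1 else 1) * (f x :: complex))"
proof -
  have "(\<Sum>x\<in>A. (if P x then -1 else 1) * f x) = (\<Sum>x\<in>A. if P x then - f x else f x)"
    by (rule sum.cong) auto
  also have "\<dots> = (\<Sum>x\<in>A \<inter> {x. P x}. - f x) + (\<Sum>x\<in>A \<inter> - {x. P x}. f x)"
    by (rule sum.If_cases[OF assms])
  also have "A \<inter> {x. P x} = {x\<in>A. P x}" by auto
  also have "A \<inter> - {x. P x} = {x\<in>A. \<not> P x}" by auto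
  finally show ?thesis by (simp add: sum_negf)
qed

lemma altz_A1:
  assumes l: "length X = Suc b"
  shows "altz p (Suc b) (\<lambda>Ys. altz p b (\<lambda>Us. F (hd Ys # Us)) (tl Ys)) X = fact b * altz p (Suc b) F X"
proof -
  have "altz p (Suc b) (\<lambda>Ys. altz p b (\<lambda>Us. F (hd Ys # Us)) (tl Ys)) X
     = (\<Sum>\<sigma>\<in>{\<sigma>. \<sigma> permutes {..<1 + b}}. om p (1 + b) \<sigma> X *
      (\<Sum>\<tau>\<in>{\<tau>. \<tau> permutes {..<b}}. om p b \<tau> (drop 1 (permute (1 + b) \<sigma> X)) *
          F (take 1 (permute (1 + b) \<sigma> X) @ permute b \<tau> (drop 1 (permute (1 + b) \<sigma> X)))))"
    unfolding altz_om
  proof (rule sum.cong)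
    fix \<sigma>
    let ?Ys = "permute (Suc b) \<sigma> X"
    have ne: "?Ys \<noteq> []" by (simp add: permute_def)
    have t: "\<And>L. take 1 ?Ys @ L = hd ?Ys # L" using ne by (cases ?Ys) auto
    have d: "drop 1 ?Ys = tl ?Ys" by (simp add: drop_Suc)
    show "om p (Suc b) \<sigma> X * (\<Sum>\<tau>\<in>{\<tau>. \<tau> permutes {..<b}}. om p b \<tau> (tl ?Ys) * F (hd ?Ys # permute b \<tau> (tl ?Ys)))
      = om p (1 + b) \<sigma> X * (\<Sum>\<tau>\<in>{\<tau>. \<tau> permutes {..<b}}. om p b \<tau> (drop 1 (permute (1 + b) \<sigma> X)) *
          F (take 1 (permute (1 + b) \<sigma> X) @ permute b \<tau> (drop 1 (permute (1 + b) \<sigma> X))))"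
      using t d by simp
  qed simp
  also have "\<dots> = fact b * altz p (1 + b) F X"
    by (rule altz_A) (use l in simp)
  finally show ?thesis by simp
qed

lemma altz_A1':
  assumes l: "length X = Suc b"
  shows "altz p (Suc b) (\<lambda>Ys. altz p b (\<lambda>Us. F (hd Ys # brk p q m Us)) (tl Ys)) X
     = fact b * altz p (Suc b) (\<lambda>Ys. F (hd Ys # brk p q m (tl Ys))) X"
  using altz_A1[OF l, of p "\<lambda>Ws. F (hd Ws # brk p q m (tl Ws))"] by simp

theorem theorem4p1:
  fixes p q k :: nat and Xs :: "smat list"
  assumes "k \<ge> 1"
    and "length Xs = 2 * k - 1"
    and "\<forall>X\<in>set Xs. homog p q X"
  shows "transg p q k (Pk p q k) Xs = (-1) ^ (k - 1) * of_nat k * Lamk p q (2 * k - 1) Xs"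
proof -
  obtain m where k: "k = Suc m" using assms(1) by (cases k) auto
  have l: "length Xs = Suc (2 * m)" using assms(2) k by simp
  have h: "\<And>X. X \<in> set Xs \<Longrightarrow> homog p q X" using assms(3) by blast
  let ?P = "Pk p q (Suc m)"
  let ?G = "\<lambda>ab. smap p q m (Dop p (elem (fst ab) (snd ab)) ?P)"
  let ?T = "\<lambda>ab. altz p (Suc (2 * m)) (boxt p 1 (dualf (fst ab) (snd ab)) (?G ab)) Xs"
  let ?F = "\<lambda>Ys. ?P (hd Ys # brk p q m (tl Ys))"
  let ?c = "(-1::complex) ^ m / (fact m * 2 ^ m)"
  have "transg p q k (Pk p q k) Xs = ((\<Sum>ab\<in>{ab\<in>basis_idx p q. \<not> bodd p ab}. ?T ab)
      - (\<Sum>ab\<in>{ab\<in>basis_idx p q. bodd p ab}. ?T ab)) / fact (2 * m)"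
    unfolding transg_def k by (simp add: swedge_def diff_divide_distrib sum_divide_distrib)
  also have "\<dots> = (\<Sum>ab\<in>basis_idx p q. (if bodd p ab then -1 else 1) * ?T ab) / fact (2 * m)"
    by (simp add: sum_split_sign)
  also have "(\<Sum>ab\<in>basis_idx p q. (if bodd p ab then -1 else 1) * ?T ab)
      = altz p (Suc (2 * m)) (\<lambda>Ys. \<Sum>ab\<in>basis_idx p q. (if bodd p ab then -1 else 1) *
           boxt p 1 (dualf (fst ab) (snd ab)) (?G ab) Ys) Xs"
    by (rule altz_sum)
  also have "\<dots> = altz p (Suc (2 * m)) (\<lambda>Ys. smap p q m (\<lambda>Ws. ?P (hd Ys # Ws)) (tl Ys)) Xs"
    by (rule altz_cong, rule T1p) (use homog_permute[OF _ l h] in auto)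
  also have "\<dots> = altz p (Suc (2 * m)) (\<lambda>Ys. ?c * altz p (2 * m) (\<lambda>Us. ?P (hd Ys # brk p q m Us)) (tl Ys)) Xs"
  proof (rule altz_cong)
    fix \<sigma> assume s: "\<sigma> permutes {..<Suc (2 * m)}"
    let ?Ys = "permute (Suc (2 * m)) \<sigma> Xs"
    have hY: "\<And>Y. Y \<in> set ?Ys \<Longrightarrow> homog p q Y" by (rule homog_permute[OF s l h])
    have ne: "?Ys \<noteq> []" by (simp add: permute_def)
    then have "hd ?Ys \<in> set ?Ys" by simp
    then have h0: "homog p q (hd ?Ys)" using hY by blast
    have htl: "\<And>Z. Z \<in> set (tl ?Ys) \<Longrightarrow> homog p q Z" using hY ne by (meson list.set_sel(2))
    show "smap p q m (\<lambda>Ws. ?P (hd ?Ys # Ws)) (tl ?Ys) = ?c * altz p (2 * m) (\<lambda>Us. ?P (hd ?Ys # brk p q m Us)) (tl ?Ys)"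
      by (rule smap_formula[OF LinF_Pk[OF h0] _ htl]) simp
  qed
  also have "\<dots> = ?c * altz p (Suc (2 * m)) (\<lambda>Ys. altz p (2 * m) (\<lambda>Us. ?P (hd Ys # brk p q m Us)) (tl Ys)) Xs"
    unfolding altz_om by (simp add: sum_distrib_left mult_ac)
  also have "altz p (Suc (2 * m)) (\<lambda>Ys. altz p (2 * m) (\<lambda>Us. ?P (hd Ys # brk p q m Us)) (tl Ys)) Xs
     = fact (2 * m) * altz p (Suc (2 * m)) ?F Xs"
    by (rule altz_A1'[OF l])
  also have "altz p (Suc (2 * m)) ?F Xs = 2 ^ m * fact (Suc m) * Lamk p q (Suc (2 * m)) Xs"
    using step4[OF l h] by simp
  finally have "transg p q k (Pk p q k) Xs = ?c * (fact (2 * m) * (2 ^ m * fact (Suc m) * Lamk p q (Suc (2 * m)) Xs)) / fact (2 * m)" .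
  also have "\<dots> = (-1) ^ m * of_nat (Suc m) * Lamk p q (Suc (2 * m)) Xs"
    by (simp add: field_simps fact_Suc)
  finally show ?thesis using k by simp
qed

end
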